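(* Assume (I), (M), and that $(t,\mathbf q)\mapsto f(t,i,\mathbf q)$ is continuous for every $i\in S$. Let $\delta_n\downarrow0$, and for each $n$ let $u^n\in\mathcal A^n$ be an equilibrium of the discretized problem $V^n$, with $Q^n:=Q^{u^n,n}$. If there is $Q^*\in\mathcal Q$ such that (along a subsequence) $Q^n\to Q^*$, then $f(0,i,Q^*_i)+Q^*_i\cdot F(Q^* )\ge f(0,i,Q_i)+Q_i\cdot F(Q^* )$ for all $(i,Q)\in S\times\mathcal Q$; that is, $Q^*$ is a weak equilibrium.
   Context: Continuous-time setting: $S=\{1,\dots,N\}$; $E_i=\{q\in\mathbb R^N:q_j\ge0\ (j\ne i),\ q_i=-\sum_{j\ne i}q_j\}$; $D_i\subseteq E_i$ given; $\mathcal Q=\{Q\in\mathbb R^{N\times N}:Q_i\in D_i\ \forall i\}$ ($Q_i$ the $i$-th row); $X$ a continuous-time Markov chain with generator $Q$, $\mathbb E_{i,Q}$ expectation given $X_0=i$; payoff $f(t,i,\mathbf q)$ for $t\ge0,i\in S,\mathbf q\in D_i$; $F(i,Q)=\mathbb E_{i,Q}[\int_0^\infty f(t,X_t,Q_{X_t})dt]$, $F(Q)=(F(1,Q),\dots,F(N,Q))$. $Q\otimes_\varepsilon Q'$: generator $Q$ on $[0,\varepsilon]$, then $Q'$ on $(\varepsilon,\infty)$, with expected payoff $F(i,Q\otimes_\varepsilon Q')$; $Q^*$ is a weak equilibrium if $\liminf_{\varepsilon\downarrow0}\varepsilon^{-1}(F(i,Q^* )-F(i,Q\otimes_\varepsilon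 Q^* ))\ge0$ for all $Q\in\mathcal Q,i\in S$. (I): $\int_0^\infty\sup_{i,\mathbf q\in D_i,\|\mathbf q\|\le c}|f(t,i,\mathbf q)|dt<\infty$ for all $c>0$. (M): there is $T>0$ such that $t\mapsto|f(t,i,\mathbf q)|$ is nonincreasing on $[T,\infty)$ for all $i,\mathbf q$. Discretization: $\mathfrak P=\{\alpha\in\mathbb R_+^N:\sum_k\alpha_k=1\}$; $\tilde\alpha^{i,n}=(\alpha-e_i)/\delta_n$; $\kappa^n(k,i,\alpha)=f(k\delta_n,i,\tilde\alpha^{i,n})\,\delta_n$. For a transition matrix $u$, $Q^{u,n}=(u-I)/\delta_n$; $\mathcal A^n=\{u\text{ transition matrix}:Q^{u,n}\in\mathcal Q\}$. For a discrete-time Markov chain $Y$ with transition matrix $u$, $V^n(i,u)=\mathbb E_{i,u}[\sum_{k=0}^\infty\kappa^n(k,Y_k,u_{Y_k})]$; $u\otimes_1u'$ uses $u$ at time 0 and $u'$ afterwards; $u^n\in\mathcal A^n$ is an equilibrium of $V^n$ if $V^n(i,u^n)\ge V^n(i,u\otimes_1u^n)$ for all $i\in S,u\in\mathcal A^n$. *)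

theory Defs
  imports "HOL-Analysis.Analysis"
begin

text \<open>States S = {1..N} are modelled by a finite type 'n; a generator / transition
matrix is a real matrix indexed by 'n, i.e. of type real^'n^'n, row i being Q $ i.\<close>

definition Eset :: "'n::finite \<Rightarrow> (real^'n) set" where
  "Eset i = {q. (\<forall>j. j \<noteq> i \<longrightarrow> q $ j \<ge> 0) \<and> q $ i = - (\<Sum>j\<in>UNIV - {i}. q $ j)}"

definition admissible :: "('n::finite \<Rightarrow> (real^'n) set) \<Rightarrow> (real^'n^'n) set" where
  "admissible D = {Q. \<forall>i. Q $ i \<in> D i}"

fun matpow :: "real^'n::finite^'n \<Rightarrow> nat \<Rightarrow> real^'n^'n" where
  "matpow A 0 = mat 1"
| "matpow A (Suc k) = matpow A k ** A"

text \<open>Transition matrix of the continuous-time chain with generator Q: P(t) = exp(tQ).\<close>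
definition mexp :: "real \<Rightarrow> real^'n::finite^'n \<Rightarrow> real^'n^'n" where
  "mexp t Q = (\<chi> i j. (\<Sum>k. t ^ k / fact k * matpow Q k $ i $ j))"

text \<open>F(i,Q) = E_{i,Q}[int_0^oo f(t,X_t,Q_{X_t}) dt].\<close>
definition Fval :: "(real \<Rightarrow> 'n::finite \<Rightarrow> real^'n \<Rightarrow> real) \<Rightarrow> real^'n^'n \<Rightarrow> 'n \<Rightarrow> real" where
  "Fval f Q i = (LBINT t:{0..}. (\<Sum>j\<in>UNIV. mexp t Q $ i $ j * f t j (Q $ j)))"

text \<open>F(i, Q \<otimes>_eps Q'): generator Q on [0,eps], then Q' on (eps,oo).\<close>
definition Fcat :: "(real \<Rightarrow> 'n::finite \<Rightarrow> real^'n \<Rightarrow> real) \<Rightarrow> real^'n^'n \<Rightarrow> real \<Rightarrow> real^'n^'n \<Rightarrow> 'n \<Rightarrow> real" where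
  "Fcat f Q eps Q' i = (LBINT t:{0..}.
     (if t \<le> eps then (\<Sum>j\<in>UNIV. mexp t Q $ i $ j * f t j (Q $ j))
      else (\<Sum>j\<in>UNIV. \<Sum>l\<in>UNIV. mexp eps Q $ i $ j * mexp (t - eps) Q' $ j $ l * f t l (Q' $ l))))"

definition weak_equilibrium :: "(real \<Rightarrow> 'n::finite \<Rightarrow> real^'n \<Rightarrow> real) \<Rightarrow> ('n \<Rightarrow> (real^'n) set) \<Rightarrow> real^'n^'n \<Rightarrow> bool" where
  "weak_equilibrium f D Qs \<longleftrightarrow> Qs \<in> admissible D \<and>
     (\<forall>Q\<in>admissible D. \<forall>i.
        Liminf (at_right 0) (\<lambda>eps. ereal ((Fval f Qs i - Fcat f Q eps Qs i) / eps)) \<ge> 0)"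

definition transition_matrix :: "real^'n::finite^'n \<Rightarrow> bool" where
  "transition_matrix u \<longleftrightarrow> (\<forall>i j. u $ i $ j \<ge> 0) \<and> (\<forall>i. (\<Sum>j\<in>UNIV. u $ i $ j) = 1)"

definition genOf :: "real \<Rightarrow> real^'n::finite^'n \<Rightarrow> real^'n^'n" where
  "genOf d u = (1 / d) *\<^sub>R (u - mat 1)"

definition Aset :: "('n::finite \<Rightarrow> (real^'n) set) \<Rightarrow> real \<Rightarrow> (real^'n^'n) set" where
  "Aset D d = {u. transition_matrix u \<and> genOf d u \<in> admissible D}"

definition kappa :: "(real \<Rightarrow> 'n::finite \<Rightarrow> real^'n \<Rightarrow> real) \<Rightarrow> real \<Rightarrow> nat \<Rightarrow> 'n \<Rightarrow> real^'n \<Rightarrow> real" where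
  "kappa f d k i \<alpha> = f (real k * d) i ((1 / d) *\<^sub>R (\<alpha> - axis i 1)) * d"

text \<open>V^n(i,u) = E_{i,u}[sum_k kappa^n(k,Y_k,u_{Y_k})].\<close>
definition Vdisc :: "(real \<Rightarrow> 'n::finite \<Rightarrow> real^'n \<Rightarrow> real) \<Rightarrow> real \<Rightarrow> real^'n^'n \<Rightarrow> 'n \<Rightarrow> real" where
  "Vdisc f d u i = (\<Sum>k. \<Sum>j\<in>UNIV. matpow u k $ i $ j * kappa f d k j (u $ j))"

text \<open>V^n(i, u \<otimes>_1 u'): u at time 0, u' afterwards.\<close>
definition Vcat :: "(real \<Rightarrow> 'n::finite \<Rightarrow> real^'n \<Rightarrow> real) \<Rightarrow> real \<Rightarrow> real^'n^'n \<Rightarrow> real^'n^'n \<Rightarrow> 'n \<Rightarrow> real" where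
  "Vcat f d u u' i = kappa f d 0 i (u $ i) +
     (\<Sum>k. \<Sum>j\<in>UNIV. \<Sum>l\<in>UNIV. u $ i $ j * matpow u' k $ j $ l * kappa f d (Suc k) l (u' $ l))"

definition disc_equilibrium :: "(real \<Rightarrow> 'n::finite \<Rightarrow> real^'n \<Rightarrow> real) \<Rightarrow> ('n \<Rightarrow> (real^'n) set) \<Rightarrow> real \<Rightarrow> real^'n^'n \<Rightarrow> bool" where
  "disc_equilibrium f D d un \<longleftrightarrow> un \<in> Aset D d \<and>
     (\<forall>i. \<forall>u\<in>Aset D d. Vdisc f d un i \<ge> Vcat f d u un i)"

end

theory Submission
  imports Defs
begin

definition rnorm :: "real^'n::finite^'n \<Rightarrow> real" where
  "rnorm A = Max (range (\<lambda>i. \<Sum>j\<in>UNIV. \<bar>A$i$j\<bar>))"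

lemma rnorm_ge: "(\<Sum>j\<in>UNIV. \<bar>A$i$j\<bar>) \<le> rnorm A"
  unfolding rnorm_def by (rule Max_ge) auto

lemma rnorm_le: "(\<And>i. (\<Sum>j\<in>UNIV. \<bar>A$i$j\<bar>) \<le> c) \<Longrightarrow> rnorm A \<le> c"
  unfolding rnorm_def by (rule Max.boundedI) auto

lemma rnorm_entry: "\<bar>A$i$j\<bar> \<le> rnorm A"
proof -
  have "\<bar>A$i$j\<bar> \<le> (\<Sum>j\<in>UNIV. \<bar>A$i$j\<bar>)"
    by (rule member_le_sum) auto
  then show ?thesis using rnorm_ge[of A i] by linarith
qed

lemma rnorm_nonneg: "0 \<le> rnorm A"
  using rnorm_entry[of A] by (meson abs_ge_zero order_trans)

lemma rnorm_le_sum: "rnorm A \<le> (\<Sum>i\<in>UNIV. \<Sum>j\<in>UNIV. \<bar>A$i$j\<bar>)"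
  by (rule rnorm_le, rule member_le_sum) (auto intro: sum_nonneg)

lemma rnorm_triangle: "rnorm (A + B) \<le> rnorm A + rnorm B"
proof (rule rnorm_le)
  fix i
  have "(\<Sum>j\<in>UNIV. \<bar>(A+B)$i$j\<bar>) \<le> (\<Sum>j\<in>UNIV. \<bar>A$i$j\<bar> + \<bar>B$i$j\<bar>)"
    by (rule sum_mono) (simp add: abs_triangle_ineq)
  also have "\<dots> \<le> rnorm A + rnorm B"
    using rnorm_ge[of A i] rnorm_ge[of B i] by (simp add: sum.distrib)
  finally show "(\<Sum>j\<in>UNIV. \<bar>(A+B)$i$j\<bar>) \<le> rnorm A + rnorm B" .
qed

lemma rnorm_scaleR: "rnorm (c *\<^sub>R A) = \<bar>c\<bar> * rnorm A"
proof (rule antisym)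
  show "rnorm (c *\<^sub>R A) \<le> \<bar>c\<bar> * rnorm A"
    by (rule rnorm_le) (simp add: abs_mult sum_distrib_left[symmetric] mult_left_mono rnorm_ge)
  show "\<bar>c\<bar> * rnorm A \<le> rnorm (c *\<^sub>R A)"
  proof (cases "c = 0")
    case True then show ?thesis using rnorm_nonneg by simp
  next
    case False
    have "rnorm A \<le> rnorm (c *\<^sub>R A) / \<bar>c\<bar>"
    proof (rule rnorm_le)
      fix i
      have "(\<Sum>j\<in>UNIV. \<bar>(c *\<^sub>R A)$i$j\<bar>) = \<bar>c\<bar> * (\<Sum>j\<in>UNIV. \<bar>A$i$j\<bar>)"
        by (simp add: abs_mult sum_distrib_left)
      then show "(\<Sum>j\<in>UNIV. \<bar>A$i$j\<bar>) \<le> rnorm (c *\<^sub>R A) / \<bar>c\<bar>"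
        using rnorm_ge[of "c *\<^sub>R A" i] False by (simp add: field_simps)
    qed
    then show ?thesis using False by (simp add: field_simps)
  qed
qed

lemma rnorm_eq_0: "rnorm A = 0 \<longleftrightarrow> A = 0"
proof
  assume "rnorm A = 0"
  then have "\<And>i j. A$i$j = 0" using rnorm_entry[of A] by (metis abs_le_zero_iff)
  then show "A = 0" by (simp add: vec_eq_iff)
next
  assume "A = 0" then show "rnorm A = 0"
    using rnorm_nonneg[of A] rnorm_le[of A 0] by simp
qed

lemma rnorm_mult: "rnorm (A ** B) \<le> rnorm A * rnorm B"
proof (rule rnorm_le)
  fix i
  have "(\<Sum>j\<in>UNIV. \<bar>(A ** B)$i$j\<bar>) \<le> (\<Sum>j\<in>UNIV. \<Sum>l\<in>UNIV. \<bar>A$i$l\<bar> * \<bar>B$l$j\<bar>)"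
    unfolding matrix_matrix_mult_def
    by (rule sum_mono) (auto intro: order_trans[OF sum_abs] simp: abs_mult)
  also have "\<dots> = (\<Sum>l\<in>UNIV. \<bar>A$i$l\<bar> * (\<Sum>j\<in>UNIV. \<bar>B$l$j\<bar>))"
    by (subst sum.swap) (simp add: sum_distrib_left)
  also have "\<dots> \<le> (\<Sum>l\<in>UNIV. \<bar>A$i$l\<bar> * rnorm B)"
    by (rule sum_mono) (simp add: mult_left_mono rnorm_ge)
  also have "\<dots> \<le> rnorm A * rnorm B"
    using rnorm_ge[of A i] rnorm_nonneg[of B] by (simp add: sum_distrib_right[symmetric] mult_right_mono)
  finally show "(\<Sum>j\<in>UNIV. \<bar>(A ** B)$i$j\<bar>) \<le> rnorm A * rnorm B" .
qed

lemma rnorm_one: "rnorm (mat 1 :: real^'n::finite^'n) = 1"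
proof -
  have r: "(\<Sum>j\<in>UNIV. \<bar>(mat 1 :: real^'n^'n)$i$j\<bar>) = 1" for i
    by (simp add: mat_def if_distrib cong: if_cong)
  show ?thesis using r rnorm_ge[of "mat 1::real^'n^'n"] rnorm_le[of "mat 1::real^'n^'n" 1]
    by (metis order_antisym order_refl)
qed

typedef 'n sqm = "UNIV :: (real^'n::finite^'n) set" morphisms mat_of sqm by auto

setup_lifting type_definition_sqm

instantiation sqm :: (finite) real_vector
begin
lift_definition zero_sqm :: "'a sqm" is "0" .
lift_definition plus_sqm :: "'a sqm \<Rightarrow> 'a sqm \<Rightarrow> 'a sqm" is "(+)" .
lift_definition minus_sqm :: "'a sqm \<Rightarrow> 'a sqm \<Rightarrow> 'a sqm" is "(-)" .
lift_definition uminus_sqm :: "'a sqm \<Rightarrow> 'a sqm" is "uminus" .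
lift_definition scaleR_sqm :: "real \<Rightarrow> 'a sqm \<Rightarrow> 'a sqm" is "scaleR" .
instance by standard (transfer; simp add: algebra_simps scaleR_add_right scaleR_add_left)+
end

instantiation sqm :: (finite) ring_1
begin
lift_definition one_sqm :: "'a sqm" is "mat 1" .
lift_definition times_sqm :: "'a sqm \<Rightarrow> 'a sqm \<Rightarrow> 'a sqm" is "(**)" .
instance proof
  fix a b c :: "'a sqm"
  show "a * b * c = a * (b * c)" by transfer (simp add: matrix_mul_assoc)
  show "1 * a = a" by transfer (simp add: matrix_mul_lid)
  show "a * 1 = a" by transfer (simp add: matrix_mul_rid)
  show "(a + b) * c = a * c + b * c" by transfer (vector matrix_matrix_mult_def sum.distrib[symmetric] field_simps)
  show "a * (b + c) = a * b + a * c" by transfer (simp add: matrix_add_ldistrib)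
  show "(0::'a sqm) \<noteq> 1" proof transfer
    show "(0::real^'a^'a) \<noteq> mat 1" by (simp add: vec_eq_iff mat_def)
  qed
qed
end

instantiation sqm :: (finite) real_normed_vector
begin
lift_definition norm_sqm :: "'a sqm \<Rightarrow> real" is rnorm .
definition dist_sqm :: "'a sqm \<Rightarrow> 'a sqm \<Rightarrow> real" where "dist_sqm x y = norm (x - y)"
definition sgn_sqm :: "'a sqm \<Rightarrow> 'a sqm" where "sgn_sqm x = x /\<^sub>R norm x"
definition uniformity_sqm :: "('a sqm \<times> 'a sqm) filter" where
  "uniformity_sqm = (INF e\<in>{0 <..}. principal {(x, y). dist x y < e})"
definition open_sqm :: "'a sqm set \<Rightarrow> bool" where
  "open_sqm U = (\<forall>x\<in>U. eventually (\<lambda>(x', y). x' = x \<longrightarrow> y \<in> U) uniformity)"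
instance proof
  fix x y :: "'a sqm" and a :: real
  show "norm x = 0 \<longleftrightarrow> x = 0" by transfer (rule rnorm_eq_0)
  show "norm (x + y) \<le> norm x + norm y" by transfer (rule rnorm_triangle)
  show "norm (a *\<^sub>R x) = \<bar>a\<bar> * norm x" by transfer (rule rnorm_scaleR)
qed (simp_all add: dist_sqm_def sgn_sqm_def uniformity_sqm_def open_sqm_def)
end

instance sqm :: (finite) real_normed_algebra_1
proof
  fix x y :: "'a sqm" and a :: real
  show "norm (1::'a sqm) = 1" by transfer (rule rnorm_one)
  show "norm (x * y) \<le> norm x * norm y" by transfer (rule rnorm_mult)
  show "a *\<^sub>R x * y = a *\<^sub>R (x * y)" by transfer (simp add: scalar_matrix_assoc)
  show "x * a *\<^sub>R y = a *\<^sub>R (x * y)" by transfer (simp add: matrix_scalar_ac scalar_matrix_assoc)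
qed


lemma norm_sqm_entry: "\<bar>mat_of A $ i $ j\<bar> \<le> norm A"
  by (simp add: norm_sqm.rep_eq rnorm_entry)

lemma norm_sqm_le_sum: "norm A \<le> (\<Sum>i\<in>UNIV. \<Sum>j\<in>UNIV. \<bar>mat_of A $ i $ j\<bar>)"
  by (simp add: norm_sqm.rep_eq rnorm_le_sum)

lemma bl_entry: "bounded_linear (\<lambda>A::'n::finite sqm. mat_of A $ i $ j)"
proof (rule bounded_linear_intro[where K=1])
  show "mat_of (x + y) $ i $ j = mat_of x $ i $ j + mat_of y $ i $ j" for x y :: "'n sqm"
    by (simp add: plus_sqm.rep_eq)
  show "mat_of (r *\<^sub>R x) $ i $ j = r *\<^sub>R mat_of x $ i $ j" for r and x :: "'n sqm"
    by (simp add: scaleR_sqm.rep_eq)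
  show "norm (mat_of x $ i $ j) \<le> norm x * 1" for x :: "'n sqm"
    using norm_sqm_entry[of x i j] by simp
qed

lemma tendsto_entry: "(X \<longlongrightarrow> L) F \<Longrightarrow> ((\<lambda>n. mat_of (X n) $ i $ j) \<longlongrightarrow> mat_of L $ i $ j) F"
  using bounded_linear.tendsto[OF bl_entry] .

instance sqm :: (finite) banach
proof
  fix X :: "nat \<Rightarrow> 'a sqm" assume C: "Cauchy X"
  have Ce: "Cauchy (\<lambda>n. mat_of (X n) $ i $ j)" for i j
  proof (rule metric_CauchyI)
    fix e :: real assume "0 < e"
    then obtain M where M: "\<forall>m\<ge>M. \<forall>n\<ge>M. dist (X m) (X n) < e" using metric_CauchyD[OF C] by blast
    have "dist (mat_of (X m) $ i $ j) (mat_of (X n) $ i $ j) \<le> dist (X m) (X n)" for m n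
      using norm_sqm_entry[of "X m - X n" i j] by (simp add: dist_real_def dist_norm minus_sqm.rep_eq)
    then show "\<exists>M. \<forall>m\<ge>M. \<forall>n\<ge>M. dist (mat_of (X m) $ i $ j) (mat_of (X n) $ i $ j) < e"
      using M by (meson le_less_trans)
  qed
  define L where "L = sqm (\<chi> i j. lim (\<lambda>n. mat_of (X n) $ i $ j))"
  have Le: "(\<lambda>n. mat_of (X n) $ i $ j) \<longlonglongrightarrow> mat_of L $ i $ j" for i j
    using Ce[of i j] by (simp add: L_def sqm_inverse Cauchy_convergent_iff convergent_LIMSEQ_iff)
  have "(\<lambda>n. X n - L) \<longlonglongrightarrow> 0"
  proof (rule Lim_null_comparison)
    show "\<forall>\<^sub>F n in sequentially. norm (X n - L) \<le> (\<Sum>i\<in>UNIV. \<Sum>j\<in>UNIV. \<bar>mat_of (X n) $ i $ j - mat_of L $ i $ j\<bar>)"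
      using norm_sqm_le_sum[of "X _ - L"] by (simp add: minus_sqm.rep_eq)
    have "(\<lambda>n. \<Sum>i\<in>UNIV. \<Sum>j\<in>UNIV. \<bar>mat_of (X n) $ i $ j - mat_of L $ i $ j\<bar>) \<longlonglongrightarrow> (\<Sum>i\<in>(UNIV::'a set). \<Sum>j\<in>(UNIV::'a set). \<bar>mat_of L $ i $ j - mat_of L $ i $ j\<bar>)"
      by (intro tendsto_intros Le)
    then show "(\<lambda>n. \<Sum>i\<in>UNIV. \<Sum>j\<in>UNIV. \<bar>mat_of (X n) $ i $ j - mat_of L $ i $ j\<bar>) \<longlonglongrightarrow> 0" by simp
  qed
  then have "X \<longlonglongrightarrow> L" by (rule LIM_zero_cancel)
  then show "convergent X" by (rule convergentI)
qed

lemma mat_of_power: "mat_of (A ^ k) = matpow (mat_of A) k"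
  by (induction k) (simp_all add: one_sqm.rep_eq times_sqm.rep_eq power_Suc2 del: power_Suc)

lemma mat_of_sqm[simp]: "mat_of (sqm A) = A"
  by (simp add: sqm_inverse)

lemma matpow_scaleR: "matpow (c *\<^sub>R Q) k = c ^ k *\<^sub>R matpow Q k"
  by (induction k) (simp_all add: scalar_matrix_assoc[symmetric] matrix_scalar_ac)

lemma mexp_eq: "mexp t Q = mat_of (exp (t *\<^sub>R sqm Q))"
proof -
  have "(\<lambda>n. mat_of ((t *\<^sub>R sqm Q) ^ n /\<^sub>R fact n) $ i $ j) sums (mat_of (exp (t *\<^sub>R sqm Q)) $ i $ j)" for i j
    using bounded_linear.sums[OF bl_entry exp_converges] .
  moreover have "mat_of ((t *\<^sub>R sqm Q) ^ n /\<^sub>R fact n) $ i $ j = t ^ n / fact n * matpow Q n $ i $ j" for n i j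
    by (simp add: scaleR_sqm.rep_eq mat_of_power matpow_scaleR field_simps del: scaleR_power)
  ultimately show ?thesis unfolding mexp_def by (simp add: vec_eq_iff sums_iff)
qed

lemma mexp_sums: "(\<lambda>n. t ^ n / fact n * matpow Q n $ i $ j) sums (mexp t Q $ i $ j)"
proof -
  have "(\<lambda>n. mat_of ((t *\<^sub>R sqm Q) ^ n /\<^sub>R fact n) $ i $ j) sums (mat_of (exp (t *\<^sub>R sqm Q)) $ i $ j)"
    using bounded_linear.sums[OF bl_entry exp_converges] .
  moreover have "mat_of ((t *\<^sub>R sqm Q) ^ n /\<^sub>R fact n) $ i $ j = t ^ n / fact n * matpow Q n $ i $ j" for n
    by (simp add: scaleR_sqm.rep_eq mat_of_power matpow_scaleR field_simps del: scaleR_power)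
  ultimately show ?thesis by (simp add: mexp_eq)
qed

definition gen :: "real^'n::finite^'n \<Rightarrow> bool" where
  "gen Q \<longleftrightarrow> (\<forall>i. Q $ i \<in> Eset i)"

lemma gen_rowsum: "gen Q \<Longrightarrow> (\<Sum>j\<in>UNIV. Q$l$j) = 0"
proof -
  assume "gen Q"
  then have "Q$l$l = - (\<Sum>j\<in>UNIV - {l}. Q$l$j)" unfolding gen_def Eset_def by auto
  moreover have "(\<Sum>j\<in>UNIV. Q$l$j) = Q$l$l + (\<Sum>j\<in>UNIV - {l}. Q$l$j)"
    by (rule sum.remove) auto
  ultimately show ?thesis by simp
qed

lemma gen_offdiag: "gen Q \<Longrightarrow> i \<noteq> j \<Longrightarrow> 0 \<le> Q$i$j"
  unfolding gen_def Eset_def by auto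

lemma matpow_rowsum: assumes "gen Q" shows "(\<Sum>j\<in>UNIV. matpow Q (Suc n) $ i $ j) = 0"
proof -
  have "(\<Sum>j\<in>UNIV. matpow Q (Suc n) $ i $ j) = (\<Sum>j\<in>UNIV. \<Sum>l\<in>UNIV. matpow Q n $ i $ l * Q $ l $ j)"
    by (simp add: matrix_matrix_mult_def)
  also have "\<dots> = (\<Sum>l\<in>UNIV. matpow Q n $ i $ l * (\<Sum>j\<in>UNIV. Q $ l $ j))"
    by (subst sum.swap) (simp add: sum_distrib_left)
  also have "\<dots> = 0" using gen_rowsum[OF assms] by simp
  finally show ?thesis .
qed

lemma matpow_nonneg: "(\<And>i j. 0 \<le> P$i$j) \<Longrightarrow> 0 \<le> matpow P n $ i $ j"
proof (induction n arbitrary: i j)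
  case 0 then show ?case by (simp add: mat_def)
next
  case (Suc n) then show ?case
    by (simp add: matrix_matrix_mult_def sum_nonneg)
qed

lemma mexp_nonneg_aux: "(\<And>i j. 0 \<le> P$i$j) \<Longrightarrow> 0 \<le> t \<Longrightarrow> 0 \<le> mexp t P $ i $ j"
proof -
  assume P: "\<And>i j. 0 \<le> P$i$j" and t: "0 \<le> t"
  have nn: "0 \<le> t ^ n / fact n * matpow P n $ i $ j" for n
    by (intro mult_nonneg_nonneg divide_nonneg_nonneg zero_le_power t fact_ge_zero matpow_nonneg P)
  have s: "(\<lambda>n. t ^ n / fact n * matpow P n $ i $ j) sums (mexp t P $ i $ j)" by (rule mexp_sums)
  have "0 \<le> (\<Sum>n. t ^ n / fact n * matpow P n $ i $ j)"
    by (rule suminf_nonneg) (use s nn in \<open>auto simp: sums_iff\<close>)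
  then show ?thesis using s by (simp add: sums_iff)
qed

lemma mat_scaleR_one: "(mat c :: real^'n::finite^'n) = c *\<^sub>R mat 1"
  by (simp add: vec_eq_iff mat_def)

lemma sqm_mat: "sqm (mat c) = c *\<^sub>R (1 :: 'n::finite sqm)"
  by (metis mat_of_inverse mat_scaleR_one one_sqm.rep_eq scaleR_sqm.rep_eq)

lemma mexp_rowsum: assumes "gen Q" shows "(\<Sum>j\<in>UNIV. mexp t Q $ i $ j) = 1"
proof -
  have "(\<lambda>n. \<Sum>j\<in>UNIV. t ^ n / fact n * matpow Q n $ i $ j) sums (\<Sum>j\<in>UNIV. mexp t Q $ i $ j)"
    by (rule sums_sum) (rule mexp_sums)
  moreover have "(\<Sum>j\<in>UNIV. t ^ n / fact n * matpow Q n $ i $ j) = (if n = 0 then 1 else 0)" for n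
  proof (cases n)
    case 0 then show ?thesis by (simp add: mat_def)
  next
    case (Suc m) then show ?thesis
    proof -
      have "(\<Sum>j\<in>UNIV. t ^ n / fact n * matpow Q n $ i $ j) = t ^ n / fact n * (\<Sum>j\<in>UNIV. matpow Q n $ i $ j)"
        by (rule sum_distrib_left[symmetric])
      then show ?thesis using matpow_rowsum[OF assms, of m i] Suc by simp
    qed
  qed
  ultimately have "(\<lambda>n. if n = 0 then 1 else 0) sums (\<Sum>j\<in>UNIV. mexp t Q $ i $ j)" by simp
  moreover have "(\<lambda>n::nat. if n = 0 then (1::real) else 0) sums 1"
    using sums_single[of 0 "\<lambda>_. 1::real"] by simp
  ultimately show ?thesis using sums_unique2 by blast
qed


lemma exp_shift: "exp (x + r *\<^sub>R (1::'n::finite sqm)) = exp r *\<^sub>R exp x"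
proof -
  have c: "x * (r *\<^sub>R 1) = (r *\<^sub>R 1) * x"
    by (simp only: mult_scaleR_right mult_scaleR_left mult_1_right mult_1_left)
  have "exp (x + r *\<^sub>R (1::'n sqm)) = exp x * exp (r *\<^sub>R 1)" by (rule exp_add_commuting[OF c])
  also have "exp (r *\<^sub>R (1::'n sqm)) = exp r *\<^sub>R 1"
    using exp_of_real[of r, where 'a="'n sqm"] unfolding of_real_def .
  finally show ?thesis by simp
qed

lemma mexp_nonneg: assumes "gen Q" "0 \<le> t" shows "0 \<le> mexp t Q $ i $ j"
proof -
  define c where "c = (\<Sum>i\<in>UNIV. \<bar>Q$i$i\<bar>)"
  define P where "P = Q + mat c"
  have Pnn: "0 \<le> P$i$j" for i j
  proof (cases "i = j")
    case True
    have "\<bar>Q$i$i\<bar> \<le> c" unfolding c_def by (rule member_le_sum) auto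
    then show ?thesis using True by (simp add: P_def mat_def)
  next
    case False then show ?thesis using gen_offdiag[OF assms(1) False] by (simp add: P_def mat_def)
  qed
  have "t *\<^sub>R sqm Q = t *\<^sub>R sqm P + (- (t * c)) *\<^sub>R 1"
    by (rule mat_of_inject[THEN iffD1])
      (simp add: P_def plus_sqm.rep_eq minus_sqm.rep_eq scaleR_sqm.rep_eq one_sqm.rep_eq vec_eq_iff mat_def algebra_simps)
  then have "exp (t *\<^sub>R sqm Q) = exp (- (t * c)) *\<^sub>R exp (t *\<^sub>R sqm P)"
    using exp_shift[of "t *\<^sub>R sqm P" "- (t * c)"] by simp
  then have "mexp t Q $ i $ j = exp (- (t * c)) * mexp t P $ i $ j"
    by (simp add: mexp_eq scaleR_sqm.rep_eq)
  then show ?thesis using mexp_nonneg_aux[OF Pnn assms(2)] by simp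
qed

lemma mexp_stoch: "gen Q \<Longrightarrow> 0 \<le> t \<Longrightarrow> transition_matrix (mexp t Q)"
  unfolding transition_matrix_def using mexp_nonneg mexp_rowsum by blast

lemma stoch_rnorm: assumes "transition_matrix A" shows "rnorm A = 1"
proof -
  have "(\<Sum>j\<in>UNIV. \<bar>A$i$j\<bar>) = 1" for i
    using assms unfolding transition_matrix_def by simp
  then show ?thesis using rnorm_ge[of A] rnorm_le[of A 1] by (metis order_antisym order_refl)
qed

lemma stoch_norm: "transition_matrix A \<Longrightarrow> norm (sqm A) = 1"
  by (simp add: norm_sqm.rep_eq stoch_rnorm)

lemma exp_rem_bound:
  fixes x :: "'a::{real_normed_algebra_1,banach}"
  shows "norm (exp x - 1 - x) \<le> norm x ^ 2 * exp (norm x)"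
proof -
  define g where "g n = inverse (fact (n+2)) *\<^sub>R x ^ (n+2)" for n
  define h where "h n = norm x ^ 2 * (norm x ^ n /\<^sub>R fact n)" for n
  have hs: "h sums (norm x ^ 2 * exp (norm x))"
    unfolding h_def by (intro sums_mult exp_converges)
  have le: "norm (g n) \<le> h n" for n
  proof -
    have "norm (g n) \<le> inverse (fact (n+2)) * norm x ^ (n+2)"
      unfolding g_def using norm_power_ineq[of x "n+2"]
      by (simp only: norm_scaleR) (simp add: mult_left_mono del: power_Suc power_add)
    also have "\<dots> \<le> inverse (fact n) * norm x ^ (n+2)"
      by (intro mult_right_mono le_imp_inverse_le fact_mono) auto
    also have "\<dots> = h n" by (simp add: h_def power_add power2_eq_square field_simps)
    finally show ?thesis .
  qed
  have sn: "summable (\<lambda>n. norm (g n))"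
    by (rule summable_comparison_test[OF _ sums_summable[OF hs]]) (use le in auto)
  have "exp x - 1 - x = suminf g" unfolding g_def using exp_first_two_terms[of x] by simp
  then have "norm (exp x - 1 - x) \<le> (\<Sum>n. norm (g n))" using summable_norm[OF sn] by simp
  also have "\<dots> \<le> suminf h" by (rule suminf_le[OF le sn sums_summable[OF hs]])
  also have "\<dots> = norm x ^ 2 * exp (norm x)" using hs by (simp add: sums_iff)
  finally show ?thesis .
qed

lemma norm_power_diff:
  fixes x y :: "'a::real_normed_algebra_1"
  assumes "norm x \<le> 1" "norm y \<le> 1"
  shows "norm (x ^ k - y ^ k) \<le> real k * norm (x - y)"
proof (induction k)
  case 0 then show ?case by simp
next
  case (Suc k)
  have eq: "x ^ Suc k - y ^ Suc k = x ^ k * (x - y) + (x ^ k - y ^ k) * y"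
    by (simp add: power_Suc2 algebra_simps del: power_Suc)
  have "norm (x ^ k) \<le> 1"
    using norm_power_ineq[of x k] power_le_one[OF norm_ge_zero assms(1), of k] by linarith
  then have a: "norm (x ^ k * (x - y)) \<le> norm (x - y)"
    using norm_mult_ineq[of "x^k" "x - y"] by (meson mult_left_le_one_le norm_ge_zero order_trans)
  have b: "norm ((x ^ k - y ^ k) * y) \<le> real k * norm (x - y)"
    using norm_mult_ineq[of "x^k - y^k" y] Suc.IH assms(2)
    by (meson mult_right_le_one_le norm_ge_zero order_trans)
  show ?case unfolding eq using norm_triangle_ineq[of "x ^ k * (x - y)" "(x ^ k - y ^ k) * y"] a b
    by (simp add: algebra_simps)
qed

lemma tendsto_sqm:
  fixes X :: "'c \<Rightarrow> real^'n::finite^'n"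
  assumes "(X \<longlongrightarrow> L) F"
  shows "((\<lambda>m. sqm (X m)) \<longlongrightarrow> sqm L) F"
proof -
  have "((\<lambda>m. sqm (X m) - sqm L) \<longlongrightarrow> 0) F"
  proof (rule Lim_null_comparison)
    show "\<forall>\<^sub>F m in F. norm (sqm (X m) - sqm L) \<le> (\<Sum>i\<in>UNIV. \<Sum>j\<in>UNIV. \<bar>X m $ i $ j - L $ i $ j\<bar>)"
      using norm_sqm_le_sum[of "sqm (X _) - sqm L"] by (simp add: minus_sqm.rep_eq)
    have "((\<lambda>m. \<Sum>i\<in>UNIV. \<Sum>j\<in>UNIV. \<bar>X m $ i $ j - L $ i $ j\<bar>) \<longlongrightarrow> (\<Sum>i\<in>(UNIV::'n set). \<Sum>j\<in>(UNIV::'n set). \<bar>L $ i $ j - L $ i $ j\<bar>)) F"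
      by (intro tendsto_intros tendsto_vec_nth assms)
    then show "((\<lambda>m. \<Sum>i\<in>UNIV. \<Sum>j\<in>UNIV. \<bar>X m $ i $ j - L $ i $ j\<bar>) \<longlongrightarrow> 0) F" by simp
  qed
  then show ?thesis by (rule LIM_zero_cancel)
qed

lemma exp_of_nat_scale: "exp (d *\<^sub>R x) ^ k = exp ((real k * d) *\<^sub>R (x::'a::{real_normed_algebra_1,banach}))"
proof (induction k)
  case 0 then show ?case by simp
next
  case (Suc k)
  have c: "(d *\<^sub>R x) * ((real k * d) *\<^sub>R x) = ((real k * d) *\<^sub>R x) * (d *\<^sub>R x)"
    by (simp add: mult_scaleR_left mult_scaleR_right)
  have "(real (Suc k) * d) *\<^sub>R x = d *\<^sub>R x + (real k * d) *\<^sub>R x"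
    by (simp add: algebra_simps)
  then have "exp ((real (Suc k) * d) *\<^sub>R x) = exp (d *\<^sub>R x) * exp ((real k * d) *\<^sub>R x)"
    using exp_add_commuting[OF c] by simp
  then show ?case using Suc.IH by simp
qed

lemma exp_scale_tendsto:
  fixes A :: "'a::{real_normed_algebra_1,banach}"
  assumes "(c \<longlongrightarrow> s) F"
  shows "((\<lambda>x. exp (c x *\<^sub>R A)) \<longlongrightarrow> exp (s *\<^sub>R A)) F"
proof -
  have h: "((\<lambda>x. c x - s) \<longlongrightarrow> 0) F" using tendsto_diff[OF assms tendsto_const, of s] by simp
  have e1: "((\<lambda>x. exp ((c x - s) *\<^sub>R A) - 1) \<longlongrightarrow> 0) F"
  proof (rule Lim_null_comparison)
    show "\<forall>\<^sub>F x in F. norm (exp ((c x - s) *\<^sub>R A) - 1) \<le> (norm (c x - s) * norm A) ^ 2 * exp (norm (c x - s) * norm A) + norm (c x - s) * norm A"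
    proof (rule always_eventually, rule allI)
      fix x
      have "norm (exp ((c x - s) *\<^sub>R A) - 1) \<le> norm (exp ((c x - s) *\<^sub>R A) - 1 - (c x - s) *\<^sub>R A) + norm ((c x - s) *\<^sub>R A)"
        using norm_triangle_ineq[of "exp ((c x - s) *\<^sub>R A) - 1 - (c x - s) *\<^sub>R A" "(c x - s) *\<^sub>R A"] by simp
      also have "\<dots> \<le> norm ((c x - s) *\<^sub>R A) ^ 2 * exp (norm ((c x - s) *\<^sub>R A)) + norm ((c x - s) *\<^sub>R A)"
        using exp_rem_bound[of "(c x - s) *\<^sub>R A"] by simp
      finally show "norm (exp ((c x - s) *\<^sub>R A) - 1) \<le> (norm (c x - s) * norm A) ^ 2 * exp (norm (c x - s) * norm A) + norm (c x - s) * norm A"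
        by simp
    qed
    have "((\<lambda>x. (norm (c x - s) * norm A) ^ 2 * exp (norm (c x - s) * norm A) + norm (c x - s) * norm A) \<longlongrightarrow>
        (norm (0::real) * norm A) ^ 2 * exp (norm (0::real) * norm A) + norm (0::real) * norm A) F"
      by (intro tendsto_intros h)
    then show "((\<lambda>x. (norm (c x - s) * norm A) ^ 2 * exp (norm (c x - s) * norm A) + norm (c x - s) * norm A) \<longlongrightarrow> 0) F"
      by simp
  qed
  have "((\<lambda>x. exp (s *\<^sub>R A) * (exp ((c x - s) *\<^sub>R A) - 1) + exp (s *\<^sub>R A)) \<longlongrightarrow> exp (s *\<^sub>R A) * 0 + exp (s *\<^sub>R A)) F"
    by (intro tendsto_add tendsto_mult tendsto_const e1)
  moreover have "exp (s *\<^sub>R A) * (exp ((c x - s) *\<^sub>R A) - 1) + exp (s *\<^sub>R A) = exp (c x *\<^sub>R A)" for x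
  proof -
    have cm: "(s *\<^sub>R A) * ((c x - s) *\<^sub>R A) = ((c x - s) *\<^sub>R A) * (s *\<^sub>R A)"
      by (simp add: mult_scaleR_left mult_scaleR_right)
    have "c x *\<^sub>R A = s *\<^sub>R A + (c x - s) *\<^sub>R A" by (simp add: algebra_simps)
    then have "exp (c x *\<^sub>R A) = exp (s *\<^sub>R A) * exp ((c x - s) *\<^sub>R A)"
      using exp_add_commuting[OF cm] by simp
    then show ?thesis by (simp add: algebra_simps)
  qed
  ultimately show ?thesis by simp
qed

lemma discrete_to_exp:
  fixes G :: "real^'n::finite^'n"
  assumes G: "gen G"
    and d0: "\<And>m. 0 < d m" and dlim: "d \<longlonglongrightarrow> 0"
    and Qlim: "Qm \<longlonglongrightarrow> G"
    and stoch: "\<And>m. transition_matrix (mat 1 + d m *\<^sub>R Qm m)"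
    and klim: "(\<lambda>m. real (k m) * d m) \<longlonglongrightarrow> s"
  shows "(\<lambda>m. matpow (mat 1 + d m *\<^sub>R Qm m) (k m) $ i $ j) \<longlonglongrightarrow> mexp s G $ i $ j"
proof -
  define X where "X m = sqm (mat 1 + d m *\<^sub>R Qm m)" for m
  define G' where "G' = sqm G"
  define Y where "Y m = exp (d m *\<^sub>R G')" for m
  have nX: "norm (X m) \<le> 1" for m unfolding X_def using stoch_norm[OF stoch] by simp
  have nY: "norm (Y m) \<le> 1" for m
    unfolding Y_def G'_def using stoch_norm[OF mexp_stoch[OF G less_imp_le[OF d0]], of m]
    by (simp add: mexp_eq mat_of_inverse)
  have XY: "X m - Y m = d m *\<^sub>R (sqm (Qm m) - G') - (exp (d m *\<^sub>R G') - 1 - d m *\<^sub>R G')" for m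
    unfolding X_def Y_def
    by (rule mat_of_inject[THEN iffD1])
      (simp add: plus_sqm.rep_eq minus_sqm.rep_eq scaleR_sqm.rep_eq one_sqm.rep_eq algebra_simps)
  have bnd: "norm (X m ^ k m - Y m ^ k m) \<le> (real (k m) * d m) * (norm (sqm (Qm m) - G') + d m * (norm G' ^ 2 * exp (d m * norm G')))" for m
  proof -
    have "norm (X m - Y m) \<le> norm (d m *\<^sub>R (sqm (Qm m) - G')) + norm (exp (d m *\<^sub>R G') - 1 - d m *\<^sub>R G')"
      unfolding XY by (rule norm_triangle_ineq4)
    also have "\<dots> \<le> d m * norm (sqm (Qm m) - G') + norm (d m *\<^sub>R G') ^ 2 * exp (norm (d m *\<^sub>R G'))"
      using d0[of m] exp_rem_bound[of "d m *\<^sub>R G'"] by simp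
    also have "\<dots> = d m * (norm (sqm (Qm m) - G') + d m * (norm G' ^ 2 * exp (d m * norm G')))"
      using d0[of m] by (simp add: power2_eq_square algebra_simps)
    finally have "norm (X m - Y m) \<le> \<dots>" .
    then have "real (k m) * norm (X m - Y m) \<le> real (k m) * (d m * (norm (sqm (Qm m) - G') + d m * (norm G' ^ 2 * exp (d m * norm G'))))"
      by (rule mult_left_mono) simp
    then show ?thesis using norm_power_diff[OF nX[of m] nY[of m], of "k m"] by (simp add: mult.assoc)
  qed
  have "(\<lambda>m. (real (k m) * d m) * (norm (sqm (Qm m) - G') + d m * (norm G' ^ 2 * exp (d m * norm G'))))
      \<longlonglongrightarrow> s * (norm (G' - G') + 0 * (norm G' ^ 2 * exp (0 * norm G')))"
  proof -
    have "(\<lambda>m. sqm (Qm m) - G') \<longlonglongrightarrow> G' - G'"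
      unfolding G'_def by (rule tendsto_diff[OF tendsto_sqm[OF Qlim] tendsto_const])
    then have a: "(\<lambda>m. norm (sqm (Qm m) - G')) \<longlonglongrightarrow> norm (G' - G')" by (rule tendsto_norm)
    have b: "(\<lambda>m. exp (d m * norm G')) \<longlonglongrightarrow> exp (0 * norm G')"
      by (rule tendsto_exp[OF tendsto_mult[OF dlim tendsto_const]])
    have c: "(\<lambda>m. d m * (norm G' ^ 2 * exp (d m * norm G'))) \<longlonglongrightarrow> 0 * (norm G' ^ 2 * exp (0 * norm G'))"
      by (rule tendsto_mult[OF dlim tendsto_mult[OF tendsto_const b]])
    show ?thesis by (rule tendsto_mult[OF klim tendsto_add[OF a c]])
  qed
  then have lim0: "(\<lambda>m. (real (k m) * d m) * (norm (sqm (Qm m) - G') + d m * (norm G' ^ 2 * exp (d m * norm G')))) \<longlonglongrightarrow> 0"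
    by simp
  have "(\<lambda>m. X m ^ k m - Y m ^ k m) \<longlonglongrightarrow> 0"
    by (rule Lim_null_comparison[OF always_eventually lim0]) (rule allI, rule bnd)
  moreover have "(\<lambda>m. Y m ^ k m) \<longlonglongrightarrow> exp (s *\<^sub>R G')"
  proof -
    have "(\<lambda>m. (real (k m) * d m) *\<^sub>R G') \<longlonglongrightarrow> s *\<^sub>R G'"
      by (rule tendsto_scaleR[OF klim tendsto_const])
    show ?thesis unfolding Y_def exp_of_nat_scale by (rule exp_scale_tendsto[OF klim])
  qed
  ultimately have "(\<lambda>m. (X m ^ k m - Y m ^ k m) + Y m ^ k m) \<longlonglongrightarrow> 0 + exp (s *\<^sub>R G')"
    by (rule tendsto_add)
  then have "(\<lambda>m. X m ^ k m) \<longlonglongrightarrow> exp (s *\<^sub>R G')" by simp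
  from tendsto_entry[OF this, of i j] show ?thesis
    by (simp add: X_def mat_of_power mexp_eq G'_def)
qed

lemma step_meas: "(\<lambda>s::real. b (nat \<lfloor>s / d\<rfloor>) :: real) \<in> borel_measurable borel"
  by measurable

lemma step_sums:
  fixes b :: "nat \<Rightarrow> real"
  assumes d: "0 < d" and int: "set_integrable lborel {0..} (\<lambda>s. b (nat \<lfloor>s / d\<rfloor>))"
  shows "(\<lambda>k. d * b k) sums (LBINT s:{0..}. b (nat \<lfloor>s / d\<rfloor>))"
proof -
  define A where "A k = {real k * d ..< real (Suc k) * d}" for k
  have memA: "s \<in> A k \<longleftrightarrow> 0 \<le> s \<and> nat \<lfloor>s / d\<rfloor> = k" for s k
  proof -
    have "s \<in> A k \<longleftrightarrow> real k \<le> s / d \<and> s / d < real k + 1"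
      unfolding A_def using d by (simp add: field_simps)
    also have "\<dots> \<longleftrightarrow> \<lfloor>s / d\<rfloor> = int k"
      by (simp add: floor_eq_iff)
    also have "\<dots> \<longleftrightarrow> 0 \<le> s \<and> nat \<lfloor>s / d\<rfloor> = k"
    proof
      assume "\<lfloor>s / d\<rfloor> = int k"
      then have "0 \<le> s / d" by (metis of_nat_0_le_iff zero_le_floor)
      then show "0 \<le> s \<and> nat \<lfloor>s / d\<rfloor> = k" using d \<open>\<lfloor>s / d\<rfloor> = int k\<close> by (simp add: zero_le_divide_iff)
    qed (use d in \<open>auto simp: zero_le_divide_iff\<close>)
    finally show ?thesis .
  qed
  have U: "(\<Union>k. A k) = {0..}" using memA by auto
  have disj: "A i \<inter> A j = {}" if "i \<noteq> j" for i j using memA that by auto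
  have eqA: "(LBINT s:A k. c (nat \<lfloor>s / d\<rfloor>)) = d * c k" for k and c :: "nat \<Rightarrow> real"
  proof -
    have "(LBINT s:A k. c (nat \<lfloor>s / d\<rfloor>)) = (LBINT s:A k. c k)"
    proof (rule set_lebesgue_integral_cong)
      show "A k \<in> sets lborel" by (simp add: A_def)
      show "\<forall>x. x \<in> A k \<longrightarrow> c (nat \<lfloor>x / d\<rfloor>) = c k" using memA by simp
    qed
    also have "\<dots> = measure lborel (A k) *\<^sub>R c k"
    proof (rule set_integral_const)
      show "A k \<in> sets lborel" by (simp add: A_def)
      have "real k * d \<le> real (Suc k) * d" using d by (intro mult_right_mono) auto
      then show "emeasure lborel (A k) \<noteq> \<infinity>" by (simp add: A_def del: of_nat_Suc)
    qed
    also have "measure lborel (A k) = d" using d by (simp add: A_def algebra_simps)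
    finally show ?thesis by simp
  qed
  have intabs: "set_integrable lborel {0..} (\<lambda>s. \<bar>b (nat \<lfloor>s / d\<rfloor>)\<bar>)"
    using int by (simp add: set_integrable_abs)
  have partial: "(\<Sum>k<N. d * \<bar>b k\<bar>) = (LBINT s:{0..<real N * d}. \<bar>b (nat \<lfloor>s / d\<rfloor>)\<bar>)" for N
  proof (induction N)
    case 0 then show ?case by (simp add: set_lebesgue_integral_def)
  next
    case (Suc N)
    have un: "{0..<real (Suc N) * d} = {0..<real N * d} \<union> A N"
    proof -
      have z: "0 \<le> d * real N" using d by simp
      show ?thesis using d by (auto simp: A_def algebra_simps intro: order_trans[OF z])
    qed
    have "(LBINT s:{0..<real (Suc N) * d}. \<bar>b (nat \<lfloor>s / d\<rfloor>)\<bar>) =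
        (LBINT s:{0..<real N * d}. \<bar>b (nat \<lfloor>s / d\<rfloor>)\<bar>) + (LBINT s:A N. \<bar>b (nat \<lfloor>s / d\<rfloor>)\<bar>)"
    proof -
      have i2: "set_integrable lborel (A N) (\<lambda>s. \<bar>b (nat \<lfloor>s / d\<rfloor>)\<bar>)"
        by (rule set_integrable_subset[OF intabs]) (use memA in auto, simp add: A_def)
      have i1: "set_integrable lborel {0..<real N * d} (\<lambda>s. \<bar>b (nat \<lfloor>s / d\<rfloor>)\<bar>)"
        by (rule set_integrable_subset[OF intabs]) auto
      show ?thesis unfolding un
        by (rule set_integral_Un[OF _ i1 i2]) (auto simp: A_def)
    qed
    also have "(LBINT s:A N. \<bar>b (nat \<lfloor>s / d\<rfloor>)\<bar>) = d * \<bar>b N\<bar>"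
      using eqA[of N "\<lambda>k. \<bar>b k\<bar>"] by simp
    finally show ?case using Suc.IH by simp
  qed
  have le: "(LBINT s:{0..<real N * d}. \<bar>b (nat \<lfloor>s / d\<rfloor>)\<bar>) \<le> (LBINT s:{0..}. \<bar>b (nat \<lfloor>s / d\<rfloor>)\<bar>)" for N
  proof -
    have i1: "set_integrable lborel {0..<real N * d} (\<lambda>s. \<bar>b (nat \<lfloor>s / d\<rfloor>)\<bar>)"
      by (rule set_integrable_subset[OF intabs]) auto
    show ?thesis unfolding set_lebesgue_integral_def
      by (rule integral_mono) (use i1 intabs in \<open>auto simp: set_integrable_def indicator_def\<close>)
  qed
  have summ: "summable (\<lambda>k. d * \<bar>b k\<bar>)"
    by (rule summableI_nonneg_bounded[where x="LBINT s:{0..}. \<bar>b (nat \<lfloor>s / d\<rfloor>)\<bar>"])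
      (use d partial le in auto)
  have "(LBINT s:(\<Union>k. A k). b (nat \<lfloor>s / d\<rfloor>)) = (\<Sum>k. LBINT s:A k. b (nat \<lfloor>s / d\<rfloor>))"
  proof (rule lebesgue_integral_countable_add)
    show "A i \<in> sets lborel" for i by (simp add: A_def)
    show "A i \<inter> A j = {}" if "i \<noteq> j" for i j using disj that .
    show "set_integrable lborel (\<Union>k. A k) (\<lambda>s. b (nat \<lfloor>s / d\<rfloor>))" unfolding U by (rule int)
  qed
  then have "(LBINT s:{0..}. b (nat \<lfloor>s / d\<rfloor>)) = (\<Sum>k. d * b k)"
  proof -
    have "(\<Sum>k. LBINT s:A k. b (nat \<lfloor>s / d\<rfloor>)) = (\<Sum>k. d * b k)"
      by (rule suminf_cong) (rule eqA)
    then show ?thesis using \<open>(LBINT s:(\<Union>k. A k). b (nat \<lfloor>s / d\<rfloor>)) = _\<close> unfolding U by simp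
  qed
  moreover have "summable (\<lambda>k. d * b k)"
  proof (rule summable_rabs_cancel)
    have "\<bar>d * b k\<bar> = d * \<bar>b k\<bar>" for k using d by (simp add: abs_mult)
    then show "summable (\<lambda>k. \<bar>d * b k\<bar>)" using summ by simp
  qed
  ultimately show ?thesis by (simp add: sums_iff)
qed

lemma dct0:
  fixes g :: "nat \<Rightarrow> real \<Rightarrow> real" and g0 :: "real \<Rightarrow> real"
  assumes meas: "\<And>m. (\<lambda>s. indicator {0..} s * g m s) \<in> borel_measurable borel"
    and conv: "\<And>s. 0 \<le> s \<Longrightarrow> (\<lambda>m. g m s) \<longlonglongrightarrow> g0 s"
    and T: "0 < T"
    and bC: "\<And>m s. 0 \<le> s \<Longrightarrow> s < T \<Longrightarrow> \<bar>g m s\<bar> \<le> C"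
    and h: "integrable lborel h"
    and bh: "\<And>m. AE s in lborel. T \<le> s \<longrightarrow> \<bar>g m s\<bar> \<le> h s"
  shows "set_integrable lborel {0..} g0" "\<And>m. set_integrable lborel {0..} (g m)"
    "(\<lambda>m. LBINT s:{0..}. g m s) \<longlonglongrightarrow> (LBINT s:{0..}. g0 s)"
proof -
  define w where "w s = indicator {0..T} s * C + \<bar>h s\<bar>" for s
  have wi: "integrable lborel w"
    unfolding w_def by (intro Bochner_Integration.integrable_add integrable_mult_left integrable_real_indicator integrable_abs h) (use T in auto)
  have lim: "(\<lambda>m. indicator {0..} s * g m s) \<longlonglongrightarrow> indicator {0..} s * g0 s" for s
    by (cases "0 \<le> s") (auto intro: conv tendsto_mult tendsto_const)
  have meas0: "(\<lambda>s. indicator {0..} s * g0 s) \<in> borel_measurable borel"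
    by (rule borel_measurable_LIMSEQ_real[OF lim meas])
  have bnd: "AE s in lborel. norm (indicator {0..} s * g m s) \<le> w s" for m
    using bh[of m]
  proof eventually_elim
    case (elim s)
    show ?case
    proof (cases "0 \<le> s")
      case False then show ?thesis by (simp add: w_def)
    next
      case True
      show ?thesis
      proof (cases "s < T")
        case True
        with \<open>0 \<le> s\<close> bC[of s m] show ?thesis by (simp add: w_def)
      next
        case False
        with \<open>0 \<le> s\<close> elim have "\<bar>g m s\<bar> \<le> \<bar>h s\<bar>" by auto
        moreover have "0 \<le> indicator {0..T} s * C"
        proof -
          have "0 \<le> C" using bC[of 0 m] T by (meson abs_ge_zero order_trans order_refl)
          then show ?thesis by (simp add: indicator_def)
        qed
        ultimately show ?thesis using \<open>0 \<le> s\<close> by (simp add: w_def)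
      qed
    qed
  qed
  have "integrable lborel (\<lambda>s. indicator {0..} s * g0 s) \<and> (\<forall>m. integrable lborel (\<lambda>s. indicator {0..} s * g m s)) \<and>
    (\<lambda>m. LINT s|lborel. indicator {0..} s * g m s) \<longlonglongrightarrow> (LINT s|lborel. indicator {0..} s * g0 s)"
  proof -
    have A: "(\<lambda>s. indicator {0..} s * g0 s) \<in> borel_measurable lborel" using meas0 by simp
    have B: "(\<lambda>s. indicator {0..} s * g m s) \<in> borel_measurable lborel" for m using meas by simp
    have C: "AE s in lborel. (\<lambda>m. indicator {0..} s * g m s) \<longlonglongrightarrow> indicator {0..} s * g0 s"
      using lim by simp
    show ?thesis using integral_dominated_convergence[OF A B wi C bnd]
        integrable_dominated_convergence[OF A B wi C bnd] integrable_dominated_convergence2[OF A B wi C bnd] by blast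
  qed
  then show "set_integrable lborel {0..} g0" "\<And>m. set_integrable lborel {0..} (g m)"
    "(\<lambda>m. LBINT s:{0..}. g m s) \<longlonglongrightarrow> (LBINT s:{0..}. g0 s)"
    by (auto simp: set_integrable_def set_lebesgue_integral_def)
qed

lemma stoch_mult: "transition_matrix A \<Longrightarrow> transition_matrix B \<Longrightarrow> transition_matrix (A ** B)"
proof -
  assume A: "transition_matrix A" and B: "transition_matrix B"
  have nn: "0 \<le> (A ** B) $ i $ j" for i j
    using A B unfolding transition_matrix_def matrix_matrix_mult_def by (auto intro: sum_nonneg)
  have "(\<Sum>j\<in>UNIV. (A ** B) $ i $ j) = (\<Sum>l\<in>UNIV. A $ i $ l * (\<Sum>j\<in>UNIV. B $ l $ j))" for i
    unfolding matrix_matrix_mult_def by (simp add: sum_distrib_left) (rule sum.swap)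
  then have "(\<Sum>j\<in>UNIV. (A ** B) $ i $ j) = 1" for i
    using A B unfolding transition_matrix_def by simp
  then show ?thesis using nn unfolding transition_matrix_def by simp
qed

lemma stoch_one: "transition_matrix (mat 1 :: real^'n::finite^'n)"
  unfolding transition_matrix_def by (simp add: mat_def)

lemma matpow_stoch: "transition_matrix A \<Longrightarrow> transition_matrix (matpow A k)"
  by (induction k) (auto intro: stoch_mult stoch_one)

lemma stoch_entry: assumes "transition_matrix A" shows "0 \<le> A $ i $ j" "A $ i $ j \<le> 1"
proof -
  show "0 \<le> A $ i $ j" using assms unfolding transition_matrix_def by simp
  have "A $ i $ j \<le> (\<Sum>j\<in>UNIV. A $ i $ j)"
    by (rule member_le_sum) (use assms in \<open>auto simp: transition_matrix_def\<close>)
  then show "A $ i $ j \<le> 1" using assms unfolding transition_matrix_def by simp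
qed

lemma genOf_inv: "0 < d \<Longrightarrow> mat 1 + d *\<^sub>R genOf d u = u"
  unfolding genOf_def by simp

lemma genOf_of: "0 < d \<Longrightarrow> genOf d (mat 1 + d *\<^sub>R Q) = Q"
  unfolding genOf_def by simp

lemma mat1_row: "(mat 1 :: real^'n::finite^'n) $ l = axis l 1"
  by (simp add: vec_eq_iff mat_def axis_def)

lemma kappa_Suc: "kappa f d (Suc k) l (u $ l) = f ((real k + 1) * d) l (genOf d u $ l) * d"
  unfolding kappa_def genOf_def by (simp add: mat1_row algebra_simps)

lemma kappa_0: "kappa f d 0 l (u $ l) = f 0 l (genOf d u $ l) * d"
  unfolding kappa_def genOf_def by (simp add: mat1_row algebra_simps)

lemma mexp_cont: "continuous_on UNIV (\<lambda>t. mexp t G $ i $ j)"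
proof -
  have "((\<lambda>t. mexp t G $ i $ j) \<longlongrightarrow> mexp t0 G $ i $ j) (at t0 within UNIV)" for t0
  proof -
    have "((\<lambda>t. exp (t *\<^sub>R sqm G)) \<longlongrightarrow> exp (t0 *\<^sub>R sqm G)) (at t0)"
      by (rule exp_scale_tendsto) (rule tendsto_ident_at)
    from tendsto_entry[OF this, of i j] show ?thesis by (simp add: mexp_eq)
  qed
  then show ?thesis unfolding continuous_on_def by blast
qed

lemma mexp_zero: "mexp 0 G = mat 1"
  by (simp add: mexp_eq one_sqm.rep_eq)

lemma mexp_add: "mexp (s + t) G = mexp s G ** mexp t G"
proof -
  have c: "(s *\<^sub>R sqm G) * (t *\<^sub>R sqm G) = (t *\<^sub>R sqm G) * (s *\<^sub>R sqm G)"
    by (simp add: mult_scaleR_left mult_scaleR_right)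
  have "exp ((s + t) *\<^sub>R sqm G) = exp (s *\<^sub>R sqm G) * exp (t *\<^sub>R sqm G)"
    using exp_add_commuting[OF c] by (simp add: scaleR_add_left)
  then show ?thesis by (simp add: mexp_eq times_sqm.rep_eq)
qed

lemma sum_stoch_bound:
  fixes a b :: "'n::finite \<Rightarrow> real"
  assumes "\<And>l. 0 \<le> a l" "\<And>l. a l \<le> 1"
  shows "\<bar>\<Sum>l\<in>UNIV. a l * b l\<bar> \<le> (\<Sum>l\<in>UNIV. \<bar>b l\<bar>)"
proof -
  have "\<bar>\<Sum>l\<in>UNIV. a l * b l\<bar> \<le> (\<Sum>l\<in>UNIV. \<bar>a l * b l\<bar>)" by (rule sum_abs)
  also have "\<dots> \<le> (\<Sum>l\<in>UNIV. \<bar>b l\<bar>)"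
  proof (rule sum_mono)
    fix l
    have "\<bar>a l\<bar> * \<bar>b l\<bar> \<le> 1 * \<bar>b l\<bar>" using assms[of l] by (intro mult_right_mono) auto
    then show "\<bar>a l * b l\<bar> \<le> \<bar>b l\<bar>" by (simp add: abs_mult)
  qed
  finally show ?thesis .
qed

lemma floor_bounds:
  assumes d: "0 < d" and s: "0 \<le> s"
  shows "real (nat \<lfloor>s / d\<rfloor>) * d \<le> s" "s < real (nat \<lfloor>s / d\<rfloor>) * d + d"
proof -
  have z: "0 \<le> \<lfloor>s / d\<rfloor>" using d s by simp
  then have e: "real (nat \<lfloor>s / d\<rfloor>) = of_int \<lfloor>s / d\<rfloor>" by simp
  have "of_int \<lfloor>s / d\<rfloor> * d \<le> s / d * d" by (rule mult_right_mono[OF of_int_floor_le]) (use d in simp)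
  then show "real (nat \<lfloor>s / d\<rfloor>) * d \<le> s" using d unfolding e by simp
  have "s / d * d < (of_int \<lfloor>s / d\<rfloor> + 1) * d" by (rule mult_strict_right_mono[OF real_of_int_floor_add_one_gt d])
  then show "s < real (nat \<lfloor>s / d\<rfloor>) * d + d" using d unfolding e by (simp add: algebra_simps)
qed

lemma stoch_of_gen:
  assumes Q: "gen Q" and d: "0 \<le> d" and dc: "d * (\<Sum>i\<in>UNIV. \<bar>Q$i$i\<bar>) \<le> 1"
  shows "transition_matrix (mat 1 + d *\<^sub>R Q)"
proof -
  have nn: "0 \<le> (mat 1 + d *\<^sub>R Q) $ i $ j" for i j
  proof (cases "i = j")
    case True
    have "\<bar>Q$i$i\<bar> \<le> (\<Sum>i\<in>UNIV. \<bar>Q$i$i\<bar>)" by (rule member_le_sum) auto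
    then have "d * \<bar>Q$i$i\<bar> \<le> 1" using dc d by (meson mult_left_mono order_trans)
    moreover have "- (d * \<bar>Q$i$i\<bar>) \<le> d * Q$i$i"
    proof -
      have "d * (- \<bar>Q$i$i\<bar>) \<le> d * Q$i$i" by (rule mult_left_mono) (use d in auto)
      then show ?thesis by simp
    qed
    ultimately show ?thesis using True by (simp add: mat_def)
  next
    case False then show ?thesis using gen_offdiag[OF Q False] d by (simp add: mat_def)
  qed
  have "(\<Sum>j\<in>UNIV. (mat 1 + d *\<^sub>R Q) $ i $ j) = 1" for i
  proof -
    have "(\<Sum>j\<in>UNIV. (mat 1 + d *\<^sub>R Q) $ i $ j) = (\<Sum>j\<in>UNIV. (mat 1 :: real^'a^'a) $ i $ j) + d * (\<Sum>j\<in>UNIV. Q $ i $ j)"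
      by (simp add: sum.distrib sum_distrib_left)
    also have "(\<Sum>j\<in>UNIV. (mat 1 :: real^'a^'a) $ i $ j) = 1" by (simp add: mat_def)
    finally show ?thesis using gen_rowsum[OF Q] by simp
  qed
  then show ?thesis using nn unfolding transition_matrix_def by simp
qed

lemma set_int_sum:
  fixes g :: "'i \<Rightarrow> 'a \<Rightarrow> real"
  assumes "finite I" "\<And>j. j \<in> I \<Longrightarrow> set_integrable M A (g j)"
  shows "set_integrable M A (\<lambda>x. \<Sum>j\<in>I. g j x)" "(LINT x:A|M. (\<Sum>j\<in>I. g j x)) = (\<Sum>j\<in>I. LINT x:A|M. g j x)"
proof -
  have i: "integrable M (\<lambda>x. indicator A x *\<^sub>R g j x)" if "j \<in> I" for j
    using assms(2)[OF that] by (simp add: set_integrable_def)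
  have e: "(\<lambda>x. indicator A x *\<^sub>R (\<Sum>j\<in>I. g j x)) = (\<lambda>x. \<Sum>j\<in>I. indicator A x *\<^sub>R g j x)"
    by (simp add: sum_distrib_left)
  show "set_integrable M A (\<lambda>x. \<Sum>j\<in>I. g j x)"
    unfolding set_integrable_def e using i by (intro Bochner_Integration.integrable_sum) auto
  show "(LINT x:A|M. (\<Sum>j\<in>I. g j x)) = (\<Sum>j\<in>I. LINT x:A|M. g j x)"
    unfolding set_lebesgue_integral_def e using i by (intro Bochner_Integration.integral_sum) auto
qed

lemma avg_lim:
  fixes g :: "real \<Rightarrow> real"
  assumes g: "continuous_on {0..} g"
  shows "((\<lambda>e. (LBINT t:{0..e}. g t) / e) \<longlongrightarrow> g 0) (at_right 0)"
proof (rule tendstoI)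
  fix e :: real assume e: "0 < e"
  obtain \<rho> where \<rho>: "0 < \<rho>" "\<And>t. t \<in> {0..} \<Longrightarrow> dist t 0 < \<rho> \<Longrightarrow> dist (g t) (g 0) < e / 2"
    using g e unfolding continuous_on_iff by (metis atLeast_iff half_gt_zero order_refl)
  show "\<forall>\<^sub>F x in at_right 0. dist ((LBINT t:{0..x}. g t) / x) (g 0) < e"
    unfolding eventually_at_right_field
  proof (intro exI conjI allI impI)
    show "(0::real) < \<rho>" by (rule \<rho>(1))
    fix x :: real assume x0: "0 < x" and x\<rho>: "x < \<rho>"
    have ig: "set_integrable lborel {0..x} g"
      by (rule borel_integrable_atLeastAtMost'[OF continuous_on_subset[OF g]]) auto
    have ic: "set_integrable lborel {0..x} (\<lambda>t. g 0)"
      by (rule borel_integrable_atLeastAtMost') (rule continuous_on_const)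
    have ie: "set_integrable lborel {0..x} (\<lambda>t. e / 2)"
      by (rule borel_integrable_atLeastAtMost') (rule continuous_on_const)
    have c1: "(LBINT t:{0..x}. g 0) = x * g 0"
      using set_integral_const[of "{0..x}" lborel "g 0"] x0 by simp
    have c2: "(LBINT t:{0..x}. e / 2) = x * (e / 2)"
      using set_integral_const[of "{0..x}" lborel "e / 2"] x0 by simp
    have "\<bar>(LBINT t:{0..x}. g t) - x * g 0\<bar> = \<bar>LBINT t:{0..x}. g t - g 0\<bar>"
      using set_integral_diff(2)[OF ig ic] c1 by simp
    also have "\<dots> \<le> (LBINT t:{0..x}. norm (g t - g 0))"
      using set_integral_norm_bound[OF set_integral_diff(1)[OF ig ic]] by simp
    also have "\<dots> \<le> (LBINT t:{0..x}. e / 2)"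
    proof (rule set_integral_mono)
      show "set_integrable lborel {0..x} (\<lambda>t. norm (g t - g 0))"
        using set_integral_diff(1)[OF ig ic] by (simp add: set_integrable_abs)
      show "set_integrable lborel {0..x} (\<lambda>t. e / 2)" by (rule ie)
      fix t assume "t \<in> {0..x}"
      then have "dist (g t) (g 0) < e / 2" using x\<rho> by (intro \<rho>(2)) (auto simp: dist_real_def)
      then show "norm (g t - g 0) \<le> e / 2" by (simp add: dist_real_def)
    qed
    also have "\<dots> = x * (e / 2)" by (rule c2)
    finally have "\<bar>(LBINT t:{0..x}. g t) - x * g 0\<bar> \<le> x * (e / 2)" .
    then have "\<bar>(LBINT t:{0..x}. g t) / x - g 0\<bar> \<le> e / 2"
      using x0 by (simp add: field_simps abs_divide)
    then show "dist ((LBINT t:{0..x}. g t) / x) (g 0) < e" using e by (simp add: dist_real_def)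
  qed
qed

lemma mexp_deriv: "((\<lambda>e. (mexp e G $ i $ j - mat 1 $ i $ j) / e) \<longlongrightarrow> G $ i $ j) (at_right 0)"
proof -
  have b: "\<bar>(mexp e G $ i $ j - mat 1 $ i $ j) / e - G $ i $ j\<bar> \<le> e * (norm (sqm G) ^ 2 * exp (e * norm (sqm G)))" if e: "0 < e" for e
  proof -
    have "mexp e G $ i $ j - mat 1 $ i $ j - e * G $ i $ j = mat_of (exp (e *\<^sub>R sqm G) - 1 - e *\<^sub>R sqm G) $ i $ j"
      by (simp add: mexp_eq minus_sqm.rep_eq one_sqm.rep_eq scaleR_sqm.rep_eq)
    then have "\<bar>mexp e G $ i $ j - mat 1 $ i $ j - e * G $ i $ j\<bar> \<le> norm (exp (e *\<^sub>R sqm G) - 1 - e *\<^sub>R sqm G)"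
      using norm_sqm_entry by metis
    also have "\<dots> \<le> norm (e *\<^sub>R sqm G) ^ 2 * exp (norm (e *\<^sub>R sqm G))" by (rule exp_rem_bound)
    also have "\<dots> = e * (e * (norm (sqm G) ^ 2 * exp (e * norm (sqm G))))"
      using e by (simp add: power2_eq_square)
    finally have "\<bar>mexp e G $ i $ j - mat 1 $ i $ j - e * G $ i $ j\<bar> / e \<le> e * (norm (sqm G) ^ 2 * exp (e * norm (sqm G)))"
      using e by (simp add: field_simps)
    moreover have "\<bar>mexp e G $ i $ j - mat 1 $ i $ j - e * G $ i $ j\<bar> / e = \<bar>(mexp e G $ i $ j - mat 1 $ i $ j) / e - G $ i $ j\<bar>"
      using e by (simp add: field_simps abs_divide)
    ultimately show ?thesis by simp
  qed
  have l: "((\<lambda>e. e * (norm (sqm G) ^ 2 * exp (e * norm (sqm G)))) \<longlongrightarrow> 0 * (norm (sqm G) ^ 2 * exp (0 * norm (sqm G)))) (at_right 0)"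
    by (intro tendsto_intros)
  have "((\<lambda>e. (mexp e G $ i $ j - mat 1 $ i $ j) / e - G $ i $ j) \<longlongrightarrow> 0) (at_right 0)"
  proof (rule Lim_null_comparison)
    show "\<forall>\<^sub>F e in at_right 0. norm ((mexp e G $ i $ j - mat 1 $ i $ j) / e - G $ i $ j) \<le> e * (norm (sqm G) ^ 2 * exp (e * norm (sqm G)))"
      by (rule eventually_mono[OF eventually_at_right_less]) (use b in auto)
  qed (use l in simp)
  then show ?thesis by (rule LIM_zero_cancel)
qed

locale setting =
  fixes f :: "real \<Rightarrow> 'n::finite \<Rightarrow> real^'n \<Rightarrow> real" and D :: "'n \<Rightarrow> (real^'n) set" and T :: real
  assumes D_sub: "\<And>i. D i \<subseteq> Eset i"
    and I: "\<And>c. c > 0 \<Longrightarrow>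
      (\<integral>\<^sup>+ t. indicator {0..} t *
         (SUP i. SUP q\<in>{q\<in>D i. norm q \<le> c}. ennreal \<bar>f t i q\<bar>) \<partial>lborel) < \<infinity>"
    and T_pos: "0 < T"
    and mono: "\<And>i q s t. q \<in> D i \<Longrightarrow> T \<le> s \<Longrightarrow> s \<le> t \<Longrightarrow> \<bar>f t i q\<bar> \<le> \<bar>f s i q\<bar>"
    and cont: "\<And>i. continuous_on ({0..} \<times> D i) (\<lambda>(t, q). f t i q)"
begin

definition Sf :: "real \<Rightarrow> real \<Rightarrow> ennreal" where
  "Sf c t = (SUP i. SUP q\<in>{q\<in>D i. norm q \<le> c}. ennreal \<bar>f t i q\<bar>)"

lemma le_Sf: "q \<in> D l \<Longrightarrow> norm q \<le> c \<Longrightarrow> ennreal \<bar>f t l q\<bar> \<le> Sf c t"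
  unfolding Sf_def by (rule SUP_upper2[of l]) (auto intro: SUP_upper)

lemma Sf_int: "0 < c \<Longrightarrow> (\<integral>\<^sup>+ t. indicator {0..} t * Sf c t \<partial>lborel) < \<infinity>"
  unfolding Sf_def by (rule I)

lemma adm_gen: "Q \<in> admissible D \<Longrightarrow> gen Q"
  using D_sub unfolding admissible_def gen_def by blast

lemma cont_t: "q \<in> D l \<Longrightarrow> continuous_on {0..} (\<lambda>t. f t l q)"
proof -
  assume q: "q \<in> D l"
  have "continuous_on {0..} (\<lambda>t. (t, q))" by (intro continuous_intros)
  moreover have "(\<lambda>t. (t, q)) ` {0..} \<subseteq> {0..} \<times> D l" using q by auto
  ultimately have "continuous_on {0..} ((\<lambda>(t, q). f t l q) \<circ> (\<lambda>t. (t, q)))"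
    by (intro continuous_on_compose continuous_on_subset[OF cont])
  then show ?thesis by (simp add: o_def)
qed

lemma meas_t: "q \<in> D l \<Longrightarrow> (\<lambda>t. indicator {0..} t * f t l q) \<in> borel_measurable borel"
proof -
  assume q: "q \<in> D l"
  show ?thesis using borel_measurable_continuous_on_indicator[OF _ cont_t[OF q]] by simp
qed

lemma fint: assumes q: "q \<in> D l" shows "integrable lborel (\<lambda>t. indicator {0..} t * f t l q)"
proof (rule integrableI_bounded)
  show "(\<lambda>t. indicator {0..} t * f t l q) \<in> borel_measurable lborel" using meas_t[OF q] by simp
  have "(\<integral>\<^sup>+ t. ennreal (norm (indicator {0..} t * f t l q)) \<partial>lborel) \<le> (\<integral>\<^sup>+ t. indicator {0..} t * Sf (norm q + 1) t \<partial>lborel)"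
  proof (rule nn_integral_mono)
    fix t
    show "ennreal (norm (indicator {0..} t * f t l q)) \<le> indicator {0..} t * Sf (norm q + 1) t"
      using le_Sf[OF q, of "norm q + 1" t] by (auto simp: indicator_def)
  qed
  also have "\<dots> < \<infinity>" by (rule Sf_int) (simp add: add_nonneg_pos)
  finally show "(\<integral>\<^sup>+ t. ennreal (norm (indicator {0..} t * f t l q)) \<partial>lborel) < \<infinity>" .
qed

lemma W_conv:
  fixes d :: "nat \<Rightarrow> real" and U :: "nat \<Rightarrow> real^'n^'n" and G :: "real^'n^'n"
  assumes G: "G \<in> admissible D"
    and d0: "\<And>m. 0 < d m" and dlim: "d \<longlonglongrightarrow> 0" and dmax: "\<And>m. d m \<le> dM"
    and U: "\<And>m. U m \<in> Aset D (d m)"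
    and Qlim: "(\<lambda>m. genOf (d m) (U m)) \<longlonglongrightarrow> G"
  shows "set_integrable lborel {0..} (\<lambda>s. \<Sum>l\<in>UNIV. matpow (U m) (nat \<lfloor>s / d m\<rfloor>) $ j $ l *
            f ((real (nat \<lfloor>s / d m\<rfloor>) + 1) * d m) l (genOf (d m) (U m) $ l))"
    and "(\<lambda>m. LBINT s:{0..}. \<Sum>l\<in>UNIV. matpow (U m) (nat \<lfloor>s / d m\<rfloor>) $ j $ l *
            f ((real (nat \<lfloor>s / d m\<rfloor>) + 1) * d m) l (genOf (d m) (U m) $ l)) \<longlonglongrightarrow> Fval f G j"
proof -
  define Qm where "Qm m = genOf (d m) (U m)" for m
  define k where "k m s = nat \<lfloor>s / d m\<rfloor>" for m s
  define g where "g m s = (\<Sum>l\<in>UNIV. matpow (U m) (k m s) $ j $ l * f ((real (k m s) + 1) * d m) l (Qm m $ l))" for m s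
  define g0 where "g0 s = (\<Sum>l\<in>UNIV. mexp s G $ j $ l * f s l (G $ l))" for s
  have QD: "Qm m $ l \<in> D l" for m l using U[of m] unfolding Qm_def Aset_def admissible_def by auto
  have GD: "G $ l \<in> D l" for l using G unfolding admissible_def by auto
  have Ust: "transition_matrix (U m)" for m using U[of m] unfolding Aset_def by auto
  have Ueq: "mat 1 + d m *\<^sub>R Qm m = U m" for m unfolding Qm_def by (rule genOf_inv[OF d0])
  have Qlim': "Qm \<longlonglongrightarrow> G" using Qlim unfolding Qm_def .
  have kd: "real (k m s) * d m \<le> s" "s < real (k m s) * d m + d m" if "0 \<le> s" for m s
    unfolding k_def using floor_bounds[OF d0 that] by auto
  have ent: "0 \<le> matpow (U m) n $ a $ b" "matpow (U m) n $ a $ b \<le> 1" for m n a b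
    using stoch_entry[OF matpow_stoch[OF Ust]] by auto
  have gbound: "\<bar>g m s\<bar> \<le> (\<Sum>l\<in>UNIV. \<bar>f ((real (k m s) + 1) * d m) l (Qm m $ l)\<bar>)" for m s
    unfolding g_def by (rule sum_stoch_bound) (use ent in auto)
  have meas: "(\<lambda>s. indicator {0..} s * g m s) \<in> borel_measurable borel" for m
  proof -
    define c where "c n = (\<Sum>l\<in>UNIV. matpow (U m) n $ j $ l * f ((real n + 1) * d m) l (Qm m $ l))" for n
    have "g m = (\<lambda>s. c (nat \<lfloor>s / d m\<rfloor>))" by (simp add: g_def c_def k_def fun_eq_iff)
    then have "g m \<in> borel_measurable borel" using step_meas by simp
    then show ?thesis by measurable
  qed
  have conv: "(\<lambda>m. g m s) \<longlonglongrightarrow> g0 s" if s: "0 \<le> s" for s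
  proof -
    have klim: "(\<lambda>m. real (k m s) * d m) \<longlonglongrightarrow> s"
    proof (rule tendsto_sandwich[of "\<lambda>m. s - d m" _ _ "\<lambda>m. s"])
      have "s - d m \<le> real (k m s) * d m" for m using kd(2)[OF s, of m] by linarith
      then show "\<forall>\<^sub>F m in sequentially. s - d m \<le> real (k m s) * d m" by (intro always_eventually allI)
      show "\<forall>\<^sub>F m in sequentially. real (k m s) * d m \<le> s" using kd(1)[OF s] by (intro always_eventually allI)
      show "(\<lambda>m. s - d m) \<longlonglongrightarrow> s" using tendsto_diff[OF tendsto_const dlim, of s] by simp
    qed simp
    have tlim: "(\<lambda>m. (real (k m s) + 1) * d m) \<longlonglongrightarrow> s"
      using tendsto_add[OF klim dlim] by (simp add: algebra_simps)
    have st: "transition_matrix (mat 1 + d m *\<^sub>R Qm m)" for m using Ust[of m] Ueq[of m] by simp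
    have mp: "(\<lambda>m. matpow (U m) (k m s) $ j $ l) \<longlonglongrightarrow> mexp s G $ j $ l" for l
      using discrete_to_exp[OF adm_gen[OF G] d0 dlim Qlim' st klim, of j l] Ueq by simp
    have fl: "(\<lambda>m. f ((real (k m s) + 1) * d m) l (Qm m $ l)) \<longlonglongrightarrow> f s l (G $ l)" for l
    proof -
      have "(\<lambda>m. ((real (k m s) + 1) * d m, Qm m $ l)) \<longlonglongrightarrow> (s, G $ l)"
        by (intro tendsto_Pair tlim tendsto_vec_nth Qlim')
      moreover have "(s, G $ l) \<in> {0..} \<times> D l" using s GD by auto
      moreover have "\<forall>\<^sub>F m in sequentially. ((real (k m s) + 1) * d m, Qm m $ l) \<in> {0..} \<times> D l"
        using QD d0 by (auto intro!: always_eventually mult_nonneg_nonneg less_imp_le)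
      ultimately have "((\<lambda>m. (\<lambda>(t, q). f t l q) ((real (k m s) + 1) * d m, Qm m $ l)) \<longlongrightarrow> (\<lambda>(t, q). f t l q) (s, G $ l)) sequentially"
        by (intro continuous_on_tendsto_compose[OF cont])
      then show ?thesis by simp
    qed
    show ?thesis unfolding g_def g0_def by (intro tendsto_sum tendsto_mult mp fl)
  qed
  define Kc where "Kc l = {0..T + dM} \<times> insert (G $ l) (range (\<lambda>m. Qm m $ l))" for l
  have Kc_sub: "Kc l \<subseteq> {0..} \<times> D l" for l unfolding Kc_def using QD GD by auto
  have "compact (\<Union>l. (\<lambda>(t, q). f t l q) ` Kc l)"
  proof (rule compact_UN)
    show "compact ((\<lambda>(t, q). f t l q) ` Kc l)" for l
      unfolding Kc_def
      by (rule compact_continuous_image[OF continuous_on_subset[OF cont Kc_sub[unfolded Kc_def]]])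
        (intro compact_Times compact_Icc compact_sequence_with_limit tendsto_vec_nth Qlim')
  qed simp
  then have "bounded (\<Union>l. (\<lambda>(t, q). f t l q) ` Kc l)" by (rule compact_imp_bounded)
  then obtain Cb where Cb0: "\<And>y. y \<in> (\<Union>l. (\<lambda>(t, q). f t l q) ` Kc l) \<Longrightarrow> \<bar>y\<bar> \<le> Cb"
    unfolding bounded_iff by auto
  have Cb: "\<bar>f t l q\<bar> \<le> Cb" if "(t, q) \<in> Kc l" for t q l
    using Cb0[of "f t l q"] that by force
  have bC: "\<bar>g m s\<bar> \<le> real CARD('n) * Cb" if "0 \<le> s" "s < T" for m s
  proof -
    have "\<bar>f ((real (k m s) + 1) * d m) l (Qm m $ l)\<bar> \<le> Cb" for l
    proof -
      have "(real (k m s) + 1) * d m = real (k m s) * d m + d m" by (simp add: algebra_simps)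
      also have "\<dots> \<le> T + dM" using kd(1)[OF that(1), of m] that(2) dmax[of m] by linarith
      finally have "((real (k m s) + 1) * d m, Qm m $ l) \<in> Kc l"
        unfolding Kc_def using d0[of m] by (auto intro!: mult_nonneg_nonneg less_imp_le)
      from Cb[OF this] show ?thesis by simp
    qed
    then have "(\<Sum>l\<in>UNIV. \<bar>f ((real (k m s) + 1) * d m) l (Qm m $ l)\<bar>) \<le> (\<Sum>l\<in>(UNIV::'n set). Cb)"
      by (intro sum_mono) auto
    then show ?thesis using gbound[of m s] by simp
  qed
  obtain cN where cN: "0 < cN" "\<And>m. norm (Qm m) \<le> cN"
  proof -
    have "Bseq Qm" using Qlim' by (intro convergent_imp_Bseq convergentI)
    then show ?thesis using that by (auto elim: BseqE)
  qed
  have nQ: "norm (Qm m $ l) \<le> cN" for m l by (rule order_trans[OF Finite_Cartesian_Product.norm_nth_le cN(2)])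
  define B where "B l s = (SUP m. ennreal \<bar>indicator {0..} s * f s l (Qm m $ l)\<bar>)" for l s
  have Bmeas: "B l \<in> borel_measurable borel" for l
  proof -
    have "(\<lambda>s. ennreal \<bar>indicator {0..} s * f s l (Qm m $ l)\<bar>) \<in> borel_measurable borel" for m
      using meas_t[OF QD[of m l]] by measurable
    then show ?thesis unfolding B_def by (intro borel_measurable_SUP) auto
  qed
  have Bint: "(\<integral>\<^sup>+ s. indicator {T..} s * B l s \<partial>lborel) < \<infinity>" for l
  proof -
    have "(\<integral>\<^sup>+ s. indicator {T..} s * B l s \<partial>lborel) \<le> (\<integral>\<^sup>+ s. indicator {0..} s * Sf cN s \<partial>lborel)"
    proof (rule nn_integral_mono)
      fix s
      show "indicator {T..} s * B l s \<le> indicator {0..} s * Sf cN s"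
      proof (cases "T \<le> s")
        case True
        then have s0: "0 \<le> s" using T_pos by linarith
        have "B l s \<le> Sf cN s" unfolding B_def
          by (rule SUP_least) (use s0 le_Sf[OF QD nQ] in simp)
        then show ?thesis using True s0 by simp
      qed simp
    qed
    also have "\<dots> < \<infinity>" by (rule Sf_int[OF cN(1)])
    finally show ?thesis .
  qed
  have Bfin: "AE s in lborel. \<forall>l\<in>UNIV. T \<le> s \<longrightarrow> B l s \<noteq> \<infinity>"
  proof (subst AE_finite_all)
    show "\<forall>l\<in>UNIV. AE s in lborel. T \<le> s \<longrightarrow> B l s \<noteq> \<infinity>"
    proof
      fix l
      have "AE s in lborel. indicator {T..} s * B l s \<noteq> \<infinity>"
        by (rule nn_integral_noteq_infinite) (use Bmeas Bint[of l] in auto)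
      then show "AE s in lborel. T \<le> s \<longrightarrow> B l s \<noteq> \<infinity>" by eventually_elim auto
    qed
  qed simp
  define h where "h s = (\<Sum>l\<in>UNIV. indicator {T..} s * enn2real (B l s))" for s
  have hint: "integrable lborel h"
    unfolding h_def
  proof (rule Bochner_Integration.integrable_sum)
    fix l assume "l \<in> (UNIV :: 'n set)"
    show "integrable lborel (\<lambda>s. indicator {T..} s * enn2real (B l s))"
    proof (rule integrableI_bounded)
      show "(\<lambda>s. indicator {T..} s * enn2real (B l s)) \<in> borel_measurable lborel"
        using Bmeas[of l] by measurable
      have "(\<integral>\<^sup>+ s. ennreal (norm (indicator {T..} s * enn2real (B l s))) \<partial>lborel) \<le> (\<integral>\<^sup>+ s. indicator {T..} s * B l s \<partial>lborel)"
        by (rule nn_integral_mono) (auto simp: indicator_def ennreal_enn2real_if)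
      then show "(\<integral>\<^sup>+ s. ennreal (norm (indicator {T..} s * enn2real (B l s))) \<partial>lborel) < \<infinity>"
        using Bint[of l] by (meson le_less_trans)
    qed
  qed
  have bh: "AE s in lborel. T \<le> s \<longrightarrow> \<bar>g m s\<bar> \<le> h s" for m
    using Bfin
  proof eventually_elim
    case (elim s)
    show ?case
    proof
      assume Ts: "T \<le> s"
      then have s0: "0 \<le> s" using T_pos by linarith
      have "\<bar>f ((real (k m s) + 1) * d m) l (Qm m $ l)\<bar> \<le> indicator {T..} s * enn2real (B l s)" for l
      proof -
        have "s \<le> (real (k m s) + 1) * d m" using kd(2)[OF s0, of m] by (simp add: algebra_simps)
        then have "\<bar>f ((real (k m s) + 1) * d m) l (Qm m $ l)\<bar> \<le> \<bar>f s l (Qm m $ l)\<bar>"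
          by (rule mono[OF QD Ts])
        also have "\<bar>f s l (Qm m $ l)\<bar> \<le> enn2real (B l s)"
        proof -
          have "ennreal \<bar>f s l (Qm m $ l)\<bar> \<le> B l s"
            unfolding B_def using s0 by (intro SUP_upper2[of m]) auto
          then have "enn2real (ennreal \<bar>f s l (Qm m $ l)\<bar>) \<le> enn2real (B l s)"
            by (rule enn2real_mono) (use elim Ts in \<open>auto simp: less_top\<close>)
          then show ?thesis by simp
        qed
        finally show ?thesis using Ts by simp
      qed
      then have "(\<Sum>l\<in>UNIV. \<bar>f ((real (k m s) + 1) * d m) l (Qm m $ l)\<bar>) \<le> h s"
        unfolding h_def by (intro sum_mono) auto
      then show "\<bar>g m s\<bar> \<le> h s" using gbound[of m s] by linarith
    qed
  qed
  have res: "set_integrable lborel {0..} g0" "\<And>m. set_integrable lborel {0..} (g m)"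
    "(\<lambda>m. LBINT s:{0..}. g m s) \<longlonglongrightarrow> (LBINT s:{0..}. g0 s)"
    using dct0[OF meas conv T_pos bC hint bh] by auto
  show "set_integrable lborel {0..} (\<lambda>s. \<Sum>l\<in>UNIV. matpow (U m) (nat \<lfloor>s / d m\<rfloor>) $ j $ l *
            f ((real (nat \<lfloor>s / d m\<rfloor>) + 1) * d m) l (genOf (d m) (U m) $ l))"
    using res(2)[of m] unfolding g_def k_def Qm_def .
  show "(\<lambda>m. LBINT s:{0..}. \<Sum>l\<in>UNIV. matpow (U m) (nat \<lfloor>s / d m\<rfloor>) $ j $ l *
            f ((real (nat \<lfloor>s / d m\<rfloor>) + 1) * d m) l (genOf (d m) (U m) $ l)) \<longlonglongrightarrow> Fval f G j"
    using res(3) unfolding g_def k_def Qm_def g0_def Fval_def .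
qed

lemma disc_ineq:
  fixes U u :: "real^'n^'n" and d :: real
  assumes d: "0 < d" and U: "U \<in> Aset D d" and u: "u \<in> Aset D d"
    and eqi: "Vdisc f d U i \<ge> Vcat f d u U i"
    and int: "\<And>j. set_integrable lborel {0..} (\<lambda>s. \<Sum>l\<in>UNIV. matpow U (nat \<lfloor>s / d\<rfloor>) $ j $ l *
            f ((real (nat \<lfloor>s / d\<rfloor>) + 1) * d) l (genOf d U $ l))"
  defines "W \<equiv> (\<chi> j. LBINT s:{0..}. \<Sum>l\<in>UNIV. matpow U (nat \<lfloor>s / d\<rfloor>) $ j $ l *
            f ((real (nat \<lfloor>s / d\<rfloor>) + 1) * d) l (genOf d U $ l))"
  shows "f 0 i (genOf d U $ i) + genOf d U $ i \<bullet> W \<ge> f 0 i (genOf d u $ i) + genOf d u $ i \<bullet> W"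
proof -
  define c where "c j k = (\<Sum>l\<in>UNIV. matpow U k $ j $ l * f ((real k + 1) * d) l (genOf d U $ l))" for j k
  have cs: "(\<lambda>k. d * c j k) sums (W $ j)" for j
    unfolding W_def c_def using step_sums[OF d int[of j]] by simp
  have kS: "(\<Sum>l\<in>UNIV. matpow U k $ j $ l * kappa f d (Suc k) l (U $ l)) = d * c j k" for j k
    unfolding c_def kappa_Suc by (simp add: sum_distrib_left algebra_simps)
  have gen_row: "(\<Sum>j\<in>UNIV. v $ i $ j * W $ j) = W $ i + d * (genOf d v $ i \<bullet> W)" for v
  proof -
    have "v = mat 1 + d *\<^sub>R genOf d v" using genOf_inv[OF d, of v] by simp
    then have "(\<Sum>j\<in>UNIV. v $ i $ j * W $ j) = (\<Sum>j\<in>UNIV. (mat 1 + d *\<^sub>R genOf d v) $ i $ j * W $ j)" by simp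
    also have "\<dots> = (\<Sum>j\<in>UNIV. mat 1 $ i $ j * W $ j) + d * (\<Sum>j\<in>UNIV. genOf d v $ i $ j * W $ j)"
      by (simp add: algebra_simps sum.distrib sum_distrib_left)
    also have "(\<Sum>j\<in>UNIV. mat 1 $ i $ j * W $ j) = W $ i"
    proof -
      have "(\<Sum>j\<in>UNIV. mat 1 $ i $ j * W $ j) = (\<Sum>j\<in>UNIV. if i = j then W $ j else 0)"
        by (rule sum.cong) (auto simp: mat_def)
      then show ?thesis by simp
    qed
    also have "(\<Sum>j\<in>UNIV. genOf d v $ i $ j * W $ j) = genOf d v $ i \<bullet> W"
      by (simp add: inner_vec_def)
    finally show ?thesis .
  qed
  have "(\<lambda>k. \<Sum>j\<in>UNIV. \<Sum>l\<in>UNIV. u $ i $ j * matpow U k $ j $ l * kappa f d (Suc k) l (U $ l)) sums (\<Sum>j\<in>UNIV. u $ i $ j * W $ j)"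
  proof -
    have "(\<lambda>k. \<Sum>j\<in>UNIV. u $ i $ j * (d * c j k)) sums (\<Sum>j\<in>UNIV. u $ i $ j * W $ j)"
      by (intro sums_sum sums_mult cs)
    moreover have "(\<Sum>l\<in>UNIV. u $ i $ j * matpow U k $ j $ l * kappa f d (Suc k) l (U $ l)) = u $ i $ j * (d * c j k)" for j k
      using kS[of k j] by (simp add: sum_distrib_left[symmetric] mult.assoc)
    ultimately show ?thesis by simp
  qed
  then have Vc: "Vcat f d u U i = f 0 i (genOf d u $ i) * d + (\<Sum>j\<in>UNIV. u $ i $ j * W $ j)"
    unfolding Vcat_def kappa_0 by (simp add: sums_iff)
  define a where "a k = (\<Sum>j\<in>UNIV. matpow U k $ i $ j * kappa f d k j (U $ j))" for k
  have comm: "matpow U k ** U = U ** matpow U k" for k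
    by (induction k) (simp_all add: matrix_mul_assoc[symmetric])
  have "(\<lambda>k. a (Suc k)) sums (\<Sum>l\<in>UNIV. U $ i $ l * W $ l)"
  proof -
    have "(\<lambda>k. \<Sum>l\<in>UNIV. U $ i $ l * (d * c l k)) sums (\<Sum>l\<in>UNIV. U $ i $ l * W $ l)"
      by (intro sums_sum sums_mult cs)
    moreover have "a (Suc k) = (\<Sum>l\<in>UNIV. U $ i $ l * (d * c l k))" for k
    proof -
      have "a (Suc k) = (\<Sum>j\<in>UNIV. (U ** matpow U k) $ i $ j * kappa f d (Suc k) j (U $ j))"
        unfolding a_def by (simp add: comm)
      also have "\<dots> = (\<Sum>l\<in>UNIV. U $ i $ l * (\<Sum>j\<in>UNIV. matpow U k $ l $ j * kappa f d (Suc k) j (U $ j)))"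
        unfolding matrix_matrix_mult_def
        by (simp add: sum_distrib_left sum_distrib_right mult.assoc) (rule sum.swap)
      also have "\<dots> = (\<Sum>l\<in>UNIV. U $ i $ l * (d * c l k))" using kS by simp
      finally show ?thesis .
    qed
    ultimately show ?thesis by simp
  qed
  then have "a sums ((\<Sum>l\<in>UNIV. U $ i $ l * W $ l) + a 0)" by (simp add: sums_Suc_iff)
  moreover have "a 0 = f 0 i (genOf d U $ i) * d"
  proof -
    have "a 0 = (\<Sum>j\<in>UNIV. if i = j then f 0 j (genOf d U $ j) * d else 0)"
      unfolding a_def by (rule sum.cong) (auto simp: mat_def kappa_0)
    then show ?thesis by simp
  qed
  ultimately have Vd: "Vdisc f d U i = f 0 i (genOf d U $ i) * d + (\<Sum>j\<in>UNIV. U $ i $ j * W $ j)"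
    unfolding Vdisc_def a_def[symmetric] by (simp add: sums_iff)
  have "d * (f 0 i (genOf d u $ i) + genOf d u $ i \<bullet> W) \<le> d * (f 0 i (genOf d U $ i) + genOf d U $ i \<bullet> W)"
    using eqi unfolding Vd Vc gen_row by (simp add: algebra_simps)
  then show ?thesis using d by simp
qed

lemma part1:
  fixes \<delta> :: "nat \<Rightarrow> real" and u :: "nat \<Rightarrow> real^'n^'n" and Qs :: "real^'n^'n"
  assumes \<delta>_pos: "\<And>n. \<delta> n > 0"
    and \<delta>_dec: "decseq \<delta>"
    and \<delta>_lim: "\<delta> \<longlonglongrightarrow> 0"
    and eq: "\<And>n. disc_equilibrium f D (\<delta> n) (u n)"
    and Qs_adm: "Qs \<in> admissible D"
    and conv: "\<exists>r. strict_mono r \<and> (\<lambda>m. genOf (\<delta> (r m)) (u (r m))) \<longlonglongrightarrow> Qs"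
    and Q: "Q \<in> admissible D"
  shows "f 0 i (Qs $ i) + Qs $ i \<bullet> (\<chi> j. Fval f Qs j) \<ge> f 0 i (Q $ i) + Q $ i \<bullet> (\<chi> j. Fval f Qs j)"
proof -
  obtain r where r: "strict_mono r" and Qlim: "(\<lambda>m. genOf (\<delta> (r m)) (u (r m))) \<longlonglongrightarrow> Qs" using conv by blast
  define d where "d m = \<delta> (r m)" for m
  define U where "U m = u (r m)" for m
  have d0: "0 < d m" for m unfolding d_def by (rule \<delta>_pos)
  have dlim: "d \<longlonglongrightarrow> 0" unfolding d_def using LIMSEQ_subseq_LIMSEQ[OF \<delta>_lim r] by (simp add: o_def)
  have dmax: "d m \<le> \<delta> 0" for m unfolding d_def using \<delta>_dec by (simp add: decseq_def)
  have UA: "U m \<in> Aset D (d m)" for m using eq[of "r m"] unfolding disc_equilibrium_def U_def d_def by blast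
  have Qlim': "(\<lambda>m. genOf (d m) (U m)) \<longlonglongrightarrow> Qs" using Qlim unfolding d_def U_def .
  define Wv where "Wv m = (\<chi> j. LBINT s:{0..}. \<Sum>l\<in>UNIV. matpow (U m) (nat \<lfloor>s / d m\<rfloor>) $ j $ l *
            f ((real (nat \<lfloor>s / d m\<rfloor>) + 1) * d m) l (genOf (d m) (U m) $ l))" for m
  have ints: "set_integrable lborel {0..} (\<lambda>s. \<Sum>l\<in>UNIV. matpow (U m) (nat \<lfloor>s / d m\<rfloor>) $ j $ l *
            f ((real (nat \<lfloor>s / d m\<rfloor>) + 1) * d m) l (genOf (d m) (U m) $ l))" for m j
    by (rule W_conv(1)[OF Qs_adm d0 dlim dmax UA Qlim'])
  have Wlim: "Wv \<longlonglongrightarrow> (\<chi> j. Fval f Qs j)"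
    unfolding Wv_def by (intro vec_tendstoI) (simp add: W_conv(2)[OF Qs_adm d0 dlim dmax UA Qlim'])
  have gQ: "gen Q" by (rule adm_gen[OF Q])
  define cQ where "cQ = (\<Sum>i\<in>UNIV. \<bar>Q$i$i\<bar>)"
  have "\<forall>\<^sub>F m in sequentially. d m < 1 / (cQ + 1)"
    using order_tendstoD(2)[OF dlim, of "1 / (cQ + 1)"] by (simp add: cQ_def add_nonneg_pos sum_nonneg)
  then have ev: "\<forall>\<^sub>F m in sequentially. f 0 i (Q $ i) + Q $ i \<bullet> Wv m \<le> f 0 i (genOf (d m) (U m) $ i) + genOf (d m) (U m) $ i \<bullet> Wv m"
  proof eventually_elim
    case (elim m)
    have cQ0: "0 \<le> cQ" unfolding cQ_def by (simp add: sum_nonneg)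
    have "d m * cQ \<le> d m * (cQ + 1)" using d0[of m] by simp
    also have "\<dots> \<le> 1" using elim cQ0 by (simp add: field_simps)
    finally have st: "transition_matrix (mat 1 + d m *\<^sub>R Q)"
      using stoch_of_gen[OF gQ less_imp_le[OF d0[of m]]] unfolding cQ_def by simp
    have uA: "mat 1 + d m *\<^sub>R Q \<in> Aset D (d m)"
      unfolding Aset_def using st Q genOf_of[OF d0[of m], of Q] by simp
    have "Vdisc f (d m) (U m) i \<ge> Vcat f (d m) (mat 1 + d m *\<^sub>R Q) (U m) i"
      using eq[of "r m"] uA unfolding disc_equilibrium_def U_def d_def by blast
    from disc_ineq[OF d0 UA uA this ints] show ?case
      unfolding Wv_def genOf_of[OF d0[of m]] .
  qed
  have QD: "genOf (d m) (U m) $ i \<in> D i" for m using UA[of m] unfolding Aset_def admissible_def by auto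
  have GD: "Qs $ i \<in> D i" using Qs_adm unfolding admissible_def by auto
  have fl: "(\<lambda>m. f 0 i (genOf (d m) (U m) $ i)) \<longlonglongrightarrow> f 0 i (Qs $ i)"
  proof -
    have "(\<lambda>m. (0::real, genOf (d m) (U m) $ i)) \<longlonglongrightarrow> (0, Qs $ i)"
      by (intro tendsto_Pair tendsto_const tendsto_vec_nth Qlim')
    moreover have "(0::real, Qs $ i) \<in> {0..} \<times> D i" using GD by auto
    moreover have "\<forall>\<^sub>F m in sequentially. (0::real, genOf (d m) (U m) $ i) \<in> {0..} \<times> D i"
      using QD by auto
    ultimately have "((\<lambda>m. (\<lambda>(t, q). f t i q) (0, genOf (d m) (U m) $ i)) \<longlongrightarrow> (\<lambda>(t, q). f t i q) (0, Qs $ i)) sequentially"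
      by (intro continuous_on_tendsto_compose[OF cont])
    then show ?thesis by simp
  qed
  have l1: "(\<lambda>m. f 0 i (genOf (d m) (U m) $ i) + genOf (d m) (U m) $ i \<bullet> Wv m) \<longlonglongrightarrow> f 0 i (Qs $ i) + Qs $ i \<bullet> (\<chi> j. Fval f Qs j)"
    by (intro tendsto_add fl tendsto_inner tendsto_vec_nth Qlim' Wlim)
  have l2: "(\<lambda>m. f 0 i (Q $ i) + Q $ i \<bullet> Wv m) \<longlonglongrightarrow> f 0 i (Q $ i) + Q $ i \<bullet> (\<chi> j. Fval f Qs j)"
    by (intro tendsto_add tendsto_const tendsto_inner Wlim)
  show ?thesis by (rule tendsto_le[OF _ l1 l2 ev]) simp
qed

definition psi :: "real^'n^'n \<Rightarrow> 'n \<Rightarrow> real \<Rightarrow> real" where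
  "psi G i t = (\<Sum>j\<in>UNIV. mexp t G $ i $ j * f t j (G $ j))"

lemma adm_row: "G \<in> admissible D \<Longrightarrow> G $ l \<in> D l"
  unfolding admissible_def by auto

lemma int_dom:
  assumes A: "A \<in> sets borel" "A \<subseteq> {0..}" and c\<phi>: "continuous_on A \<phi>"
    and q: "\<And>l. q l \<in> D l" and bnd: "\<And>t. t \<in> A \<Longrightarrow> \<bar>\<phi> t\<bar> \<le> (\<Sum>l\<in>UNIV. \<bar>f t l (q l)\<bar>)"
  shows "set_integrable lborel A \<phi>"
  unfolding set_integrable_def
proof (rule Bochner_Integration.integrable_bound)
  show "integrable lborel (\<lambda>t. \<Sum>l\<in>UNIV. \<bar>indicator {0..} t * f t l (q l)\<bar>)"
    using fint[OF q] by (intro Bochner_Integration.integrable_sum integrable_abs) auto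
  show "(\<lambda>x. indicat_real A x *\<^sub>R \<phi> x) \<in> borel_measurable lborel"
    using borel_measurable_continuous_on_indicator[OF A(1) c\<phi>] by simp
  show "AE x in lborel. norm (indicat_real A x *\<^sub>R \<phi> x) \<le> norm (\<Sum>l\<in>UNIV. \<bar>indicator {0..} x * f x l (q l)\<bar>)"
  proof (rule AE_I2)
    fix x
    show "norm (indicat_real A x *\<^sub>R \<phi> x) \<le> norm (\<Sum>l\<in>UNIV. \<bar>indicator {0..} x * f x l (q l)\<bar>)"
    proof (cases "x \<in> A")
      case True
      then have "0 \<le> x" using A(2) by auto
      then show ?thesis using True bnd[OF True] by (simp add: sum_nonneg)
    qed (simp add: sum_nonneg)
  qed
qed

lemma set_integrable_cong':
  "set_integrable M A g \<Longrightarrow> (\<And>x. x \<in> A \<Longrightarrow> g x = h x) \<Longrightarrow> set_integrable M A h"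
proof -
  assume "set_integrable M A g" "\<And>x. x \<in> A \<Longrightarrow> g x = h x"
  moreover have "(\<lambda>x. indicator A x *\<^sub>R g x) = (\<lambda>x. indicator A x *\<^sub>R h x)"
    using calculation(2) by (auto simp: fun_eq_iff indicator_def)
  ultimately show ?thesis unfolding set_integrable_def by simp
qed

lemma psi_cont: "G \<in> admissible D \<Longrightarrow> continuous_on {0..} (psi G i)"
  unfolding psi_def
  by (intro continuous_intros continuous_on_subset[OF mexp_cont] cont_t adm_row) auto

lemma psi_int: assumes G: "G \<in> admissible D" shows "set_integrable lborel {0..} (psi G i)"
proof (rule int_dom[OF _ _ psi_cont[OF G] adm_row[OF G]])
  fix t :: real assume "t \<in> {0..}"
  then have st: "transition_matrix (mexp t G)" by (intro mexp_stoch adm_gen G) auto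
  show "\<bar>psi G i t\<bar> \<le> (\<Sum>l\<in>UNIV. \<bar>f t l (G $ l)\<bar>)"
    unfolding psi_def by (rule sum_stoch_bound) (use stoch_entry[OF st] in auto)
qed auto

lemma psi0: "psi G i 0 = f 0 i (G $ i)"
proof -
  have "psi G i 0 = (\<Sum>j\<in>UNIV. if i = j then f 0 j (G $ j) else 0)"
    unfolding psi_def mexp_zero by (rule sum.cong) (auto simp: mat_def)
  then show ?thesis by simp
qed

lemma shift_int:
  fixes \<phi> :: "real \<Rightarrow> real"
  assumes \<phi>: "continuous_on {0..} \<phi>"
  shows "(LBINT t:{e<..}. \<phi> (t - e)) = (LBINT s:{0..}. \<phi> s)"
proof -
  have "(LBINT t:{e<..}. \<phi> (t - e)) = (\<integral>t. indicator {e<..} t *\<^sub>R \<phi> (t - e) \<partial>lborel)"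
    by (simp add: set_lebesgue_integral_def)
  also have "\<dots> = \<bar>1::real\<bar> *\<^sub>R (\<integral>x. indicator {e<..} (e + 1 * x) *\<^sub>R \<phi> (e + 1 * x - e) \<partial>lborel)"
    by (rule lborel_integral_real_affine) simp
  also have "\<dots> = (\<integral>x. indicator {0<..} x *\<^sub>R \<phi> x \<partial>lborel)"
    by (simp add: indicator_def)
  also have "\<dots> = (\<integral>x. indicator {0..} x *\<^sub>R \<phi> x \<partial>lborel)"
  proof (rule integral_cong_AE)
    show "(\<lambda>x. indicator {0<..} x *\<^sub>R \<phi> x) \<in> borel_measurable lborel"
    proof -
      have "continuous_on {0<..} \<phi>" by (rule continuous_on_subset[OF \<phi>]) auto
      then show ?thesis using borel_measurable_continuous_on_indicator[of "{0<..}" \<phi>] by auto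
    qed
    show "(\<lambda>x. indicator {0..} x *\<^sub>R \<phi> x) \<in> borel_measurable lborel"
      using borel_measurable_continuous_on_indicator[of "{0..}" \<phi>] \<phi> by auto
    show "AE x in lborel. indicator {0<..} x *\<^sub>R \<phi> x = indicator {0..} x *\<^sub>R \<phi> x"
      using AE_lborel_singleton[of "0::real"] by eventually_elim (auto simp: indicator_def)
  qed
  finally show ?thesis by (simp add: set_lebesgue_integral_def)
qed

lemma decomp:
  assumes G: "G \<in> admissible D" and Q: "Q \<in> admissible D" and e: "0 < e"
  shows "Fval f G i - Fcat f Q e G i = ((LBINT t:{0..e}. psi G i t) - (LBINT t:{0..e}. psi Q i t))
     + (\<Sum>j\<in>UNIV. (mexp e G $ i $ j - mexp e Q $ i $ j) * (LBINT s:{0..}. \<Sum>l\<in>UNIV. mexp s G $ j $ l * f (e + s) l (G $ l)))"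
proof -
  define Hint where "Hint j t = (\<Sum>l\<in>UNIV. mexp (t - e) G $ j $ l * f t l (G $ l))" for j t
  define H where "H j = (LBINT t:{e<..}. Hint j t)" for j
  have GD: "G $ l \<in> D l" for l by (rule adm_row[OF G])
  have Hcont: "continuous_on {e<..} (Hint j)" for j
  proof -
    have m: "continuous_on {e<..} (\<lambda>t. mexp (t - e) G $ j $ l)" for l
      by (rule continuous_on_compose2[OF mexp_cont, of _ "\<lambda>t. t - e"]) (auto intro: continuous_intros)
    have c: "continuous_on {e<..} (\<lambda>t. f t l (G $ l))" for l
      by (rule continuous_on_subset[OF cont_t[OF GD]]) (use e in auto)
    show ?thesis unfolding Hint_def by (intro continuous_on_sum continuous_on_mult m c)
  qed
  have Hint_int: "set_integrable lborel {e<..} (Hint j)" for j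
  proof (rule int_dom[OF _ _ Hcont GD])
    fix t :: real assume "t \<in> {e<..}"
    then have st: "transition_matrix (mexp (t - e) G)" by (intro mexp_stoch adm_gen G) auto
    show "\<bar>Hint j t\<bar> \<le> (\<Sum>l\<in>UNIV. \<bar>f t l (G $ l)\<bar>)"
      unfolding Hint_def by (rule sum_stoch_bound) (use stoch_entry[OF st] in auto)
  qed (use e in auto)
  have split: "(LBINT t:{0..}. g t) = (LBINT t:{0..e}. g t) + (LBINT t:{e<..}. g t)"
    if "set_integrable lborel {0..e} g" "set_integrable lborel {e<..} g" for g :: "real \<Rightarrow> real"
  proof -
    have "{0..} = {0..e} \<union> {e<..}" using e by auto
    moreover have "{0..e} \<inter> {e<..} = {}" by auto
    ultimately show ?thesis using set_integral_Un[of "{0..e}" "{e<..}" lborel g] that by simp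
  qed
  have psi_sub: "set_integrable lborel A (psi P i)" if "A \<in> sets borel" "A \<subseteq> {0..}" "P \<in> admissible D" for A P
    by (rule set_integrable_subset[OF psi_int[OF that(3)]]) (use that in auto)
  have comb: "(LBINT t:{e<..}. (\<Sum>j\<in>UNIV. c j * Hint j t)) = (\<Sum>j\<in>UNIV. c j * H j)" for c
  proof -
    have "(LBINT t:{e<..}. (\<Sum>j\<in>UNIV. c j * Hint j t)) = (\<Sum>j\<in>UNIV. LBINT t:{e<..}. c j * Hint j t)"
      by (rule set_int_sum(2)) (use Hint_int in auto)
    then show ?thesis by (simp add: H_def)
  qed
  have comb_int: "set_integrable lborel {e<..} (\<lambda>t. \<Sum>j\<in>UNIV. c j * Hint j t)" for c
    by (rule set_int_sum(1)) (use Hint_int in auto)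
  have psiG: "psi G i t = (\<Sum>j\<in>UNIV. mexp e G $ i $ j * Hint j t)" if "t \<in> {e<..}" for t
  proof -
    have "mexp t G = mexp e G ** mexp (t - e) G" using mexp_add[of e "t - e" G] by simp
    then have "psi G i t = (\<Sum>l\<in>UNIV. (\<Sum>j\<in>UNIV. mexp e G $ i $ j * mexp (t - e) G $ j $ l) * f t l (G $ l))"
      unfolding psi_def by (simp add: matrix_matrix_mult_def)
    also have "\<dots> = (\<Sum>j\<in>UNIV. mexp e G $ i $ j * Hint j t)"
      unfolding Hint_def by (simp add: sum_distrib_left sum_distrib_right mult.assoc) (rule sum.swap)
    finally show ?thesis .
  qed
  have FG: "Fval f G i = (LBINT t:{0..e}. psi G i t) + (\<Sum>j\<in>UNIV. mexp e G $ i $ j * H j)"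
  proof -
    have "Fval f G i = (LBINT t:{0..}. psi G i t)" unfolding Fval_def psi_def ..
    also have "\<dots> = (LBINT t:{0..e}. psi G i t) + (LBINT t:{e<..}. psi G i t)"
      by (rule split; rule psi_sub) (use G e in auto)
    also have "(LBINT t:{e<..}. psi G i t) = (LBINT t:{e<..}. (\<Sum>j\<in>UNIV. mexp e G $ i $ j * Hint j t))"
      by (rule set_lebesgue_integral_cong) (auto simp: psiG)
    finally show ?thesis using comb by simp
  qed
  define \<kappa> where "\<kappa> t = (if t \<le> e then (\<Sum>j\<in>UNIV. mexp t Q $ i $ j * f t j (Q $ j))
      else (\<Sum>j\<in>UNIV. \<Sum>l\<in>UNIV. mexp e Q $ i $ j * mexp (t - e) G $ j $ l * f t l (G $ l)))" for t
  have k1: "\<kappa> t = psi Q i t" if "t \<in> {0..e}" for t using that by (simp add: \<kappa>_def psi_def)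
  have k2: "\<kappa> t = (\<Sum>j\<in>UNIV. mexp e Q $ i $ j * Hint j t)" if "t \<in> {e<..}" for t
    using that by (simp add: \<kappa>_def Hint_def sum_distrib_left mult.assoc)
  have FQ: "Fcat f Q e G i = (LBINT t:{0..e}. psi Q i t) + (\<Sum>j\<in>UNIV. mexp e Q $ i $ j * H j)"
  proof -
    have "Fcat f Q e G i = (LBINT t:{0..}. \<kappa> t)" unfolding Fcat_def \<kappa>_def ..
    also have "\<dots> = (LBINT t:{0..e}. \<kappa> t) + (LBINT t:{e<..}. \<kappa> t)"
    proof (rule split)
      show "set_integrable lborel {0..e} \<kappa>"
        by (rule set_integrable_cong'[OF psi_sub[OF _ _ Q]]) (auto simp: k1)
      show "set_integrable lborel {e<..} \<kappa>"
        by (rule set_integrable_cong'[OF comb_int]) (auto simp: k2)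
    qed
    also have "(LBINT t:{0..e}. \<kappa> t) = (LBINT t:{0..e}. psi Q i t)"
      by (rule set_lebesgue_integral_cong) (auto simp: k1)
    also have "(LBINT t:{e<..}. \<kappa> t) = (LBINT t:{e<..}. (\<Sum>j\<in>UNIV. mexp e Q $ i $ j * Hint j t))"
      by (rule set_lebesgue_integral_cong) (auto simp: k2)
    finally show ?thesis using comb by simp
  qed
  have Hs: "H j = (LBINT s:{0..}. \<Sum>l\<in>UNIV. mexp s G $ j $ l * f (e + s) l (G $ l))" for j
  proof -
    define \<phi> where "\<phi> s = (\<Sum>l\<in>UNIV. mexp s G $ j $ l * f (e + s) l (G $ l))" for s
    have "continuous_on {0..} \<phi>"
    proof -
      have c: "continuous_on {0..} (\<lambda>s. f (e + s) l (G $ l))" for l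
        by (rule continuous_on_compose2[OF cont_t[OF GD], of _ "\<lambda>s. e + s"]) (use e in \<open>auto intro: continuous_intros\<close>)
      show ?thesis unfolding \<phi>_def
        by (intro continuous_on_sum continuous_on_mult continuous_on_subset[OF mexp_cont] c) auto
    qed
    from shift_int[OF this, of e] show ?thesis
      unfolding H_def Hint_def \<phi>_def by simp
  qed
  show ?thesis unfolding FG FQ Hs[symmetric] by (simp add: algebra_simps sum_subtractf)
qed

lemma Hs_lim:
  assumes G: "G \<in> admissible D"
  shows "((\<lambda>e. LBINT s:{0..}. \<Sum>l\<in>UNIV. mexp s G $ j $ l * f (e + s) l (G $ l)) \<longlongrightarrow> Fval f G j) (at_right 0)"
  unfolding tendsto_at_iff_sequentially
proof (intro allI impI)
  fix X :: "nat \<Rightarrow> real"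
  assume X: "\<forall>i. X i \<in> {0<..} - {0}" and Xlim: "X \<longlonglongrightarrow> 0"
  have X0: "0 < X n" for n using X by auto
  have GD: "G $ l \<in> D l" for l by (rule adm_row[OF G])
  obtain E where E: "0 < E" "\<And>n. norm (X n) \<le> E"
  proof -
    have "Bseq X" using Xlim by (intro convergent_imp_Bseq convergentI)
    then show ?thesis using that by (auto elim: BseqE)
  qed
  define g where "g n s = (\<Sum>l\<in>UNIV. mexp s G $ j $ l * f (X n + s) l (G $ l))" for n s
  have gc: "continuous_on {0..} (g n)" for n
  proof -
    have c: "continuous_on {0..} (\<lambda>s. f (X n + s) l (G $ l))" for l
      by (rule continuous_on_compose2[OF cont_t[OF GD], of _ "\<lambda>s. X n + s"]) (use X0[of n] in \<open>auto intro: continuous_intros\<close>)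
    show ?thesis unfolding g_def
      by (intro continuous_on_sum continuous_on_mult continuous_on_subset[OF mexp_cont] c) auto
  qed
  have meas: "(\<lambda>s. indicator {0..} s * g n s) \<in> borel_measurable borel" for n
    using borel_measurable_continuous_on_indicator[OF _ gc[of n]] by simp
  have conv: "(\<lambda>n. g n s) \<longlonglongrightarrow> psi G j s" if s: "0 \<le> s" for s
  proof -
    have fl: "(\<lambda>n. f (X n + s) l (G $ l)) \<longlonglongrightarrow> f s l (G $ l)" for l
    proof (rule continuous_on_tendsto_compose[OF cont_t[OF GD]])
      show "(\<lambda>n. X n + s) \<longlonglongrightarrow> s" using tendsto_add[OF Xlim tendsto_const, of s] by simp
      show "s \<in> {0..}" using s by simp
      have "X n + s \<in> {0..}" for n using X0[of n] s by simp
      then show "\<forall>\<^sub>F n in sequentially. X n + s \<in> {0..}" by (intro always_eventually allI)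
    qed
    show ?thesis unfolding g_def psi_def by (intro tendsto_sum tendsto_mult tendsto_const fl)
  qed
  have "compact (\<Union>l. (\<lambda>t. f t l (G $ l)) ` {0..T + E})"
    by (intro compact_UN compact_continuous_image continuous_on_subset[OF cont_t[OF GD]] compact_Icc) auto
  then have "bounded (\<Union>l. (\<lambda>t. f t l (G $ l)) ` {0..T + E})" by (rule compact_imp_bounded)
  then obtain Cb where Cb0: "\<And>y. y \<in> (\<Union>l. (\<lambda>t. f t l (G $ l)) ` {0..T + E}) \<Longrightarrow> \<bar>y\<bar> \<le> Cb"
    unfolding bounded_iff by auto
  have st: "transition_matrix (mexp s G)" if "0 \<le> s" for s by (intro mexp_stoch adm_gen G that)
  have gb: "\<bar>g n s\<bar> \<le> (\<Sum>l\<in>UNIV. \<bar>f (X n + s) l (G $ l)\<bar>)" if "0 \<le> s" for n s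
    unfolding g_def by (rule sum_stoch_bound) (use stoch_entry[OF st[OF that]] in auto)
  have bC: "\<bar>g n s\<bar> \<le> real CARD('n) * Cb" if "0 \<le> s" "s < T" for n s
  proof -
    have "\<bar>f (X n + s) l (G $ l)\<bar> \<le> Cb" for l
    proof (rule Cb0)
      have "X n + s \<le> T + E" using E(2)[of n] that by auto
      then have "X n + s \<in> {0..T + E}" using X0[of n] that by simp
      then show "f (X n + s) l (G $ l) \<in> (\<Union>l. (\<lambda>t. f t l (G $ l)) ` {0..T + E})"
        by blast
    qed
    then have "(\<Sum>l\<in>UNIV. \<bar>f (X n + s) l (G $ l)\<bar>) \<le> (\<Sum>l\<in>(UNIV::'n set). Cb)" by (intro sum_mono) auto
    then show ?thesis using gb[OF that(1), of n] by simp
  qed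
  define h where "h s = (\<Sum>l\<in>UNIV. \<bar>indicator {0..} s * f s l (G $ l)\<bar>)" for s
  have hint: "integrable lborel h"
    unfolding h_def using fint[OF GD] by (intro Bochner_Integration.integrable_sum integrable_abs) auto
  have bh: "AE s in lborel. T \<le> s \<longrightarrow> \<bar>g n s\<bar> \<le> h s" for n
  proof (rule AE_I2, rule impI)
    fix s assume Ts: "T \<le> s"
    then have s0: "0 \<le> s" using T_pos by linarith
    have "\<bar>f (X n + s) l (G $ l)\<bar> \<le> \<bar>indicator {0..} s * f s l (G $ l)\<bar>" for l
      using mono[OF GD Ts, of "X n + s"] X0[of n] s0 by simp
    then have "(\<Sum>l\<in>UNIV. \<bar>f (X n + s) l (G $ l)\<bar>) \<le> h s" unfolding h_def by (intro sum_mono) auto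
    then show "\<bar>g n s\<bar> \<le> h s" using gb[OF s0, of n] by linarith
  qed
  have "(\<lambda>n. LBINT s:{0..}. g n s) \<longlonglongrightarrow> (LBINT s:{0..}. psi G j s)"
    using dct0(3)[OF meas conv T_pos bC hint bh] by simp
  then show "((\<lambda>e. LBINT s:{0..}. \<Sum>l\<in>UNIV. mexp s G $ j $ l * f (e + s) l (G $ l)) \<circ> X) \<longlonglongrightarrow> Fval f G j"
    unfolding g_def o_def Fval_def psi_def .
qed

lemma weq:
  assumes G: "G \<in> admissible D" and Q: "Q \<in> admissible D"
    and P1: "f 0 i (G $ i) + G $ i \<bullet> (\<chi> j. Fval f G j) \<ge> f 0 i (Q $ i) + Q $ i \<bullet> (\<chi> j. Fval f G j)"
  shows "Liminf (at_right 0) (\<lambda>eps. ereal ((Fval f G i - Fcat f Q eps G i) / eps)) \<ge> 0"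
proof -
  define L where "L = f 0 i (G $ i) - f 0 i (Q $ i) + (\<Sum>j\<in>UNIV. (G $ i $ j - Q $ i $ j) * Fval f G j)"
  have L0: "0 \<le> L"
  proof -
    have "G $ i \<bullet> (\<chi> j. Fval f G j) - Q $ i \<bullet> (\<chi> j. Fval f G j) = (\<Sum>j\<in>UNIV. (G $ i $ j - Q $ i $ j) * Fval f G j)"
      by (simp add: inner_vec_def sum_subtractf algebra_simps)
    then show ?thesis using P1 unfolding L_def by linarith
  qed
  define R where "R e = ((LBINT t:{0..e}. psi G i t) / e - (LBINT t:{0..e}. psi Q i t) / e)
     + (\<Sum>j\<in>UNIV. ((mexp e G $ i $ j - mat 1 $ i $ j) / e - (mexp e Q $ i $ j - mat 1 $ i $ j) / e) *
         (LBINT s:{0..}. \<Sum>l\<in>UNIV. mexp s G $ j $ l * f (e + s) l (G $ l)))" for e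
  have RL: "(R \<longlongrightarrow> (psi G i 0 - psi Q i 0) + (\<Sum>j\<in>UNIV. (G $ i $ j - Q $ i $ j) * Fval f G j)) (at_right 0)"
    unfolding R_def
    by (intro tendsto_add tendsto_diff tendsto_sum tendsto_mult avg_lim psi_cont G Q mexp_deriv Hs_lim)
  then have RL': "(R \<longlongrightarrow> L) (at_right 0)" unfolding L_def psi0 by simp
  have "\<forall>\<^sub>F e in at_right 0. R e = (Fval f G i - Fcat f Q e G i) / e"
  proof (rule eventually_mono[OF eventually_at_right_less])
    fix e :: real assume e: "0 < e"
    show "R e = (Fval f G i - Fcat f Q e G i) / e"
      unfolding decomp[OF G Q e] R_def using e
      by (simp add: add_divide_distrib diff_divide_distrib sum_divide_distrib algebra_simps)
  qed
  then have "((\<lambda>e. (Fval f G i - Fcat f Q e G i) / e) \<longlongrightarrow> L) (at_right 0)"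
    by (rule Lim_transform_eventually[OF RL'])
  then have "((\<lambda>e. ereal ((Fval f G i - Fcat f Q e G i) / e)) \<longlongrightarrow> ereal L) (at_right 0)"
    by (simp add: lim_ereal)
  then have "Liminf (at_right 0) (\<lambda>e. ereal ((Fval f G i - Fcat f Q e G i) / e)) = ereal L"
    by (intro lim_imp_Liminf) simp_all
  then show ?thesis using L0 by simp
qed

end

theorem mainTheorem11:
  fixes f :: "real \<Rightarrow> 'n::finite \<Rightarrow> real^'n \<Rightarrow> real"
    and D :: "'n \<Rightarrow> (real^'n) set"
    and \<delta> :: "nat \<Rightarrow> real"
    and u :: "nat \<Rightarrow> real^'n^'n"
    and Qs :: "real^'n^'n"
  assumes D_sub: "\<And>i. D i \<subseteq> Eset i"
    and I: "\<And>c. c > 0 \<Longrightarrow>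
      (\<integral>\<^sup>+ t. indicator {0..} t *
         (SUP i. SUP q\<in>{q\<in>D i. norm q \<le> c}. ennreal \<bar>f t i q\<bar>) \<partial>lborel) < \<infinity>"
    and M: "\<exists>T>0. \<forall>i. \<forall>q\<in>D i. \<forall>s t. T \<le> s \<longrightarrow> s \<le> t \<longrightarrow> \<bar>f t i q\<bar> \<le> \<bar>f s i q\<bar>"
    and cont: "\<And>i. continuous_on ({0..} \<times> D i) (\<lambda>(t, q). f t i q)"
    and \<delta>_pos: "\<And>n. \<delta> n > 0"
    and \<delta>_dec: "decseq \<delta>"
    and \<delta>_lim: "\<delta> \<longlonglongrightarrow> 0"
    and eq: "\<And>n. disc_equilibrium f D (\<delta> n) (u n)"
    and Qs_adm: "Qs \<in> admissible D"
    and conv: "\<exists>r. strict_mono r \<and> (\<lambda>m. genOf (\<delta> (r m)) (u (r m))) \<longlonglongrightarrow> Qs"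
  shows "(\<forall>i. \<forall>Q\<in>admissible D.
            f 0 i (Qs $ i) + Qs $ i \<bullet> (\<chi> j. Fval f Qs j)
              \<ge> f 0 i (Q $ i) + Q $ i \<bullet> (\<chi> j. Fval f Qs j))
         \<and> weak_equilibrium f D Qs"
proof -
  obtain T where T: "T > 0" and mono: "\<forall>i. \<forall>q\<in>D i. \<forall>s t. T \<le> s \<longrightarrow> s \<le> t \<longrightarrow> \<bar>f t i q\<bar> \<le> \<bar>f s i q\<bar>"
    using M by blast
  interpret setting f D T
  proof
    show "\<And>i. D i \<subseteq> Eset i" by (rule D_sub)
    show "\<And>c. c > 0 \<Longrightarrow> (\<integral>\<^sup>+ t. indicator {0..} t * (SUP i. SUP q\<in>{q\<in>D i. norm q \<le> c}. ennreal \<bar>f t i q\<bar>) \<partial>lborel) < \<infinity>"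
      by (rule I)
    show "0 < T" by (rule T)
    show "\<And>i q s t. q \<in> D i \<Longrightarrow> T \<le> s \<Longrightarrow> s \<le> t \<Longrightarrow> \<bar>f t i q\<bar> \<le> \<bar>f s i q\<bar>"
      using mono by blast
    show "\<And>i. continuous_on ({0..} \<times> D i) (\<lambda>(t, q). f t i q)" by (rule cont)
  qed
  have P1: "\<forall>i. \<forall>Q\<in>admissible D.
            f 0 i (Qs $ i) + Qs $ i \<bullet> (\<chi> j. Fval f Qs j)
              \<ge> f 0 i (Q $ i) + Q $ i \<bullet> (\<chi> j. Fval f Qs j)"
    using part1[OF \<delta>_pos \<delta>_dec \<delta>_lim eq Qs_adm conv] by blast
  moreover have "weak_equilibrium f D Qs"
    unfolding weak_equilibrium_def
  proof (intro conjI ballI allI)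
    show "Qs \<in> admissible D" by (rule Qs_adm)
    fix Q i assume Q: "Q \<in> admissible D"
    show "0 \<le> Liminf (at_right 0) (\<lambda>eps. ereal ((Fval f Qs i - Fcat f Q eps Qs i) / eps))"
      by (rule weq[OF Qs_adm Q]) (use P1 Q in blast)
  qed
  ultimately show ?thesis by blast
qed

end
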